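(* Let $L$ be a finite geometric lattice with a sheaf $F$, let $B=\widetilde L$ be its Boolean cover (with the induced sheaf $F$), and let $a$ be an atom of $L$. Let $B^a=\{x\in B: a\in x\}$, regarded as a Boolean lattice with atoms $\{a,b\}$ for $b\ne a$ (via the isomorphism $x\mapsto x\setminus\{a\}$ with the Boolean lattice of subsets of $A\setminus\{a\}$), with the restriction of $F$. Let $L^a=\{x\in L:x\ge a\}$ be the restriction and $\widetilde{L^a}$ its Boolean cover with induced sheaf $F$. Then for all $i$, $$\mathrm{HC}_i(B^a;F)\cong\mathrm{HC}_i(\widetilde{L^a};F).$$
   Context: A finite lattice is geometric if it is graded (rank function $rk$, $rk(\mathbf{0})=0$), atomic (every element is a join of rank-$1$ elements, called atoms; the empty join is $\mathbf{0}$), and $rk(x\vee y)+rk(x\wedge y)\le rk(x)+rk(y)$. $A$ denotes the set of atoms of $L$. $L^a$ is a graded atomic lattice with minimum $a$ whose atoms are the elements covering $a$. A sheaf $F$ on a poset assigns an $R$-module $F(x)$ to each element and a homomorphism $F^y_x:F(y)\to F(x)$ to each $x\le y$, functorially. Boolean cover of a graded atomic lattice $M$ with atoms $A_M$: the lattice $\widetilde M$ of subsets of $A_M$ under inclusion with $f:\widetilde M\to M$, $S\mapsto$ join of $S$ in $M$ ($\varnothing\mapsto\min M$); a sheaf $G$ on $M$ induces $G(S)=G(f(S))$ with maps $G^{f(T)}_{f(S)}$. Cellular homology of a Boolean lattice of subsets of $\{a_1,\dots,a_n\}$ with sheaf $G$: $C_k=\bigoplus_{|x|=k}G(x)$, $d=\sum\varepsilon^x_yG^x_y$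 over $y\subset x$, $|y|=|x|-1$, $\varepsilon^x_y=(-1)^{j-1}$ if $x=\{a_{i_1},\dots,a_{i_k}\}$ ($i_1<\cdots<i_k$), $y=x\setminus\{a_{i_j}\}$; $\mathrm{HC}_*$ its homology (independent of the ordering up to isomorphism). *)

theory Defs
  imports "HOL-Algebra.Module"
begin

text \<open>A finite lattice is modelled as a finite type of class complete_lattice
  (every finite lattice is complete). Joins are Sup / sup, meets inf.\<close>

definition lcovers :: "'a::order \<Rightarrow> 'a \<Rightarrow> bool" where
  "lcovers x y \<longleftrightarrow> x < y \<and> \<not> (\<exists>z. x < z \<and> z < y)"

definition latoms :: "'a::{order,bot} set" where
  "latoms = {x. lcovers bot x}"

definition geometric_lattice :: "('a::{finite,complete_lattice}) itself \<Rightarrow> bool" where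
  "geometric_lattice _ \<longleftrightarrow>
     (\<exists>rk::'a \<Rightarrow> nat. rk bot = 0 \<and> (\<forall>x y. lcovers x y \<longrightarrow> rk y = rk x + 1)
        \<and> (\<forall>x y. rk (sup x y) + rk (inf x y) \<le> rk x + rk y))
     \<and> (\<forall>x::'a. x = Sup {p \<in> latoms. p \<le> x})"

text \<open>Least upper bound of S computed inside a sub-poset M (used for the
  join in the restricted lattice L^a; the empty join is the minimum of M).\<close>
definition lub_in :: "'a::order set \<Rightarrow> 'a set \<Rightarrow> 'a" where
  "lub_in M S = (THE u. u \<in> M \<and> (\<forall>s\<in>S. s \<le> u) \<and> (\<forall>v\<in>M. (\<forall>s\<in>S. s \<le> v) \<longrightarrow> u \<le> v))"

text \<open>res y x is the map F^y_x : F(y) \<rightarrow> F(x) for x \<le> y.\<close>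
definition is_sheaf ::
  "'r ring \<Rightarrow> ('a::order \<Rightarrow> ('r,'m) module) \<Rightarrow> ('a \<Rightarrow> 'a \<Rightarrow> 'm \<Rightarrow> 'm) \<Rightarrow> bool" where
  "is_sheaf R F res \<longleftrightarrow>
     (\<forall>x. module R (F x))
     \<and> (\<forall>x y. x \<le> y \<longrightarrow>
          (\<forall>u\<in>carrier (F y). res y x u \<in> carrier (F x))
        \<and> (\<forall>u\<in>carrier (F y). \<forall>v\<in>carrier (F y).
              res y x (u \<oplus>\<^bsub>F y\<^esub> v) = res y x u \<oplus>\<^bsub>F x\<^esub> res y x v)
        \<and> (\<forall>r\<in>carrier R. \<forall>u\<in>carrier (F y).
              res y x (r \<odot>\<^bsub>F y\<^esub> u) = r \<odot>\<^bsub>F x\<^esub> res y x u))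
     \<and> (\<forall>x. \<forall>u\<in>carrier (F x). res x x u = u)
     \<and> (\<forall>x y z. x \<le> y \<and> y \<le> z \<longrightarrow> (\<forall>u\<in>carrier (F z). res y x (res z y u) = res z x u))"

text \<open>Boolean lattice of subsets of the finite atom set X, ordered by the injection
  idx (a_i before a_j iff idx a_i < idx a_j), with sheaf G and maps Gm T S : G T \<rightarrow> G S.
  A k-chain is an element of the direct sum (= product, finitely many summands)
  of G S over S \<subseteq> X with card S = k, represented as a function that is undefined
  outside that index set.\<close>

definition bchains :: "'b set \<Rightarrow> ('b set \<Rightarrow> ('r,'m) module) \<Rightarrow> nat \<Rightarrow> ('b set \<Rightarrow> 'm) set" where
  "bchains X G k = {c. (\<forall>S. S \<subseteq> X \<and> card S = k \<longrightarrow> c S \<in> carrier (G S))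
                     \<and> (\<forall>S. \<not> (S \<subseteq> X \<and> card S = k) \<longrightarrow> c S = undefined)}"

definition bzero :: "'b set \<Rightarrow> ('b set \<Rightarrow> ('r,'m) module) \<Rightarrow> nat \<Rightarrow> 'b set \<Rightarrow> 'm" where
  "bzero X G k = (\<lambda>S. if S \<subseteq> X \<and> card S = k then \<zero>\<^bsub>G S\<^esub> else undefined)"

definition badd :: "'b set \<Rightarrow> ('b set \<Rightarrow> ('r,'m) module) \<Rightarrow> nat
    \<Rightarrow> ('b set \<Rightarrow> 'm) \<Rightarrow> ('b set \<Rightarrow> 'm) \<Rightarrow> 'b set \<Rightarrow> 'm" where
  "badd X G k c c' = (\<lambda>S. if S \<subseteq> X \<and> card S = k then c S \<oplus>\<^bsub>G S\<^esub> c' S else undefined)"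

definition bsmult :: "'b set \<Rightarrow> ('b set \<Rightarrow> ('r,'m) module) \<Rightarrow> nat
    \<Rightarrow> 'r \<Rightarrow> ('b set \<Rightarrow> 'm) \<Rightarrow> 'b set \<Rightarrow> 'm" where
  "bsmult X G k r c = (\<lambda>S. if S \<subseteq> X \<and> card S = k then r \<odot>\<^bsub>G S\<^esub> c S else undefined)"

text \<open>Sign \<epsilon>^x_y = (-1)^(j-1) where x = insert b S and b is the j-th element of x.\<close>
definition bsign :: "('b \<Rightarrow> nat) \<Rightarrow> 'b set \<Rightarrow> 'b \<Rightarrow> ('r,'m) module \<Rightarrow> 'm \<Rightarrow> 'm" where
  "bsign idx S b M v = (if even (card {z \<in> S. idx z < idx b}) then v else \<ominus>\<^bsub>M\<^esub> v)"

definition bdiff :: "'b set \<Rightarrow> ('b \<Rightarrow> nat) \<Rightarrow> ('b set \<Rightarrow> ('r,'m) module)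
    \<Rightarrow> ('b set \<Rightarrow> 'b set \<Rightarrow> 'm \<Rightarrow> 'm) \<Rightarrow> nat \<Rightarrow> ('b set \<Rightarrow> 'm) \<Rightarrow> 'b set \<Rightarrow> 'm" where
  "bdiff X idx G Gm k c = (\<lambda>S. if S \<subseteq> X \<and> card S + 1 = k
      then finsum (G S) (\<lambda>b. bsign idx S b (G S) (Gm (insert b S) S (c (insert b S)))) (X - S)
      else undefined)"

definition bcycles :: "'b set \<Rightarrow> ('b \<Rightarrow> nat) \<Rightarrow> ('b set \<Rightarrow> ('r,'m) module)
    \<Rightarrow> ('b set \<Rightarrow> 'b set \<Rightarrow> 'm \<Rightarrow> 'm) \<Rightarrow> nat \<Rightarrow> ('b set \<Rightarrow> 'm) set" where
  "bcycles X idx G Gm k =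
     {c \<in> bchains X G k. k = 0 \<or> bdiff X idx G Gm k c = bzero X G (k - 1)}"

definition bbounds :: "'b set \<Rightarrow> ('b \<Rightarrow> nat) \<Rightarrow> ('b set \<Rightarrow> ('r,'m) module)
    \<Rightarrow> ('b set \<Rightarrow> 'b set \<Rightarrow> 'm \<Rightarrow> 'm) \<Rightarrow> nat \<Rightarrow> ('b set \<Rightarrow> 'm) set" where
  "bbounds X idx G Gm k = bdiff X idx G Gm (Suc k) ` bchains X G (Suc k)"

definition bcoset :: "'b set \<Rightarrow> ('b \<Rightarrow> nat) \<Rightarrow> ('b set \<Rightarrow> ('r,'m) module)
    \<Rightarrow> ('b set \<Rightarrow> 'b set \<Rightarrow> 'm \<Rightarrow> 'm) \<Rightarrow> nat \<Rightarrow> ('b set \<Rightarrow> 'm) \<Rightarrow> ('b set \<Rightarrow> 'm) set" where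
  "bcoset X idx G Gm k c = badd X G k c ` bbounds X idx G Gm k"

text \<open>The homology module HC_k = ker d_k / im d_(k+1) (with d_0 = 0), as the
  quotient module of cosets; operations via representatives.\<close>
definition HC :: "'b set \<Rightarrow> ('b \<Rightarrow> nat) \<Rightarrow> ('b set \<Rightarrow> ('r,'m) module)
    \<Rightarrow> ('b set \<Rightarrow> 'b set \<Rightarrow> 'm \<Rightarrow> 'm) \<Rightarrow> nat \<Rightarrow> ('r, ('b set \<Rightarrow> 'm) set) module" where
  "HC X idx G Gm k =
     \<lparr> carrier = bcoset X idx G Gm k ` bcycles X idx G Gm k,
       mult = (\<lambda>_ _. undefined), one = undefined,
       zero = bcoset X idx G Gm k (bzero X G k),
       add = (\<lambda>P Q. bcoset X idx G Gm k (badd X G k (SOME p. p \<in> P) (SOME q. q \<in> Q))),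
       smult = (\<lambda>r P. bcoset X idx G Gm k (bsmult X G k r (SOME p. p \<in> P))) \<rparr>"

definition mod_isomorphic :: "'r ring \<Rightarrow> ('r,'c) module \<Rightarrow> ('r,'d) module \<Rightarrow> bool" where
  "mod_isomorphic R M N \<longleftrightarrow> (\<exists>h. bij_betw h (carrier M) (carrier N)
      \<and> (\<forall>P\<in>carrier M. \<forall>Q\<in>carrier M. h (P \<oplus>\<^bsub>M\<^esub> Q) = h P \<oplus>\<^bsub>N\<^esub> h Q)
      \<and> (\<forall>r\<in>carrier R. \<forall>P\<in>carrier M. h (r \<odot>\<^bsub>M\<^esub> P) = r \<odot>\<^bsub>N\<^esub> h P))"

end

theory Submission
  imports Defs
begin

definition sg :: "('a,'b) ring_scheme \<Rightarrow> nat \<Rightarrow> 'a \<Rightarrow> 'a" where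
  "sg M n v = (if even n then v else \<ominus>\<^bsub>M\<^esub> v)"

lemma bsign_sg: "bsign idx S b M v = sg M (card {z \<in> S. idx z < idx b}) v"
  by (simp add: bsign_def sg_def)

context abelian_group
begin

lemma sg_closed [simp]: "v \<in> carrier G \<Longrightarrow> sg G n v \<in> carrier G"
  by (simp add: sg_def)

lemma sg_sg: "v \<in> carrier G \<Longrightarrow> sg G m (sg G n v) = sg G (m + n) v"
  by (auto simp add: sg_def)

lemma sg_add: "u \<in> carrier G \<Longrightarrow> v \<in> carrier G \<Longrightarrow> sg G n (u \<oplus> v) = sg G n u \<oplus> sg G n v"
  by (auto simp add: sg_def minus_add)

lemma sg_zero [simp]: "sg G n \<zero> = \<zero>"
  by (simp add: sg_def)

lemma sg_par: "even m = even n \<Longrightarrow> sg G m v = sg G n v"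
  by (simp add: sg_def)

lemma sg_Suc: "v \<in> carrier G \<Longrightarrow> sg G (Suc n) v = \<ominus> sg G n v"
  by (auto simp add: sg_def)

lemma sg_cancel: "v \<in> carrier G \<Longrightarrow> odd (m + n) \<Longrightarrow> sg G m v \<oplus> sg G n v = \<zero>"
  by (auto simp add: sg_def r_neg l_neg)

lemma sg_finsum: "finite A \<Longrightarrow> f \<in> A \<rightarrow> carrier G \<Longrightarrow>
   sg G n (finsum G f A) = finsum G (\<lambda>x. sg G n (f x)) A"
proof (induct A rule: finite_induct)
  case empty then show ?case by simp
next
  case (insert x F)
  then show ?case by (simp add: Pi_def sg_add finsum_closed)
qed

end

lemma (in module) sg_smult: "r \<in> carrier R \<Longrightarrow> v \<in> carrier M \<Longrightarrow> sg M n (r \<odot>\<^bsub>M\<^esub> v) = r \<odot>\<^bsub>M\<^esub> sg M n v"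
  by (simp add: sg_def smult_r_minus)

definition addmap :: "('a,'c) ring_scheme \<Rightarrow> ('b,'d) ring_scheme \<Rightarrow> ('a \<Rightarrow> 'b) \<Rightarrow> bool" where
  "addmap M N f \<longleftrightarrow> (\<forall>u\<in>carrier M. f u \<in> carrier N) \<and>
     (\<forall>u\<in>carrier M. \<forall>v\<in>carrier M. f (u \<oplus>\<^bsub>M\<^esub> v) = f u \<oplus>\<^bsub>N\<^esub> f v)"

lemma addmap_zero:
  assumes "abelian_group M" "abelian_group N" "addmap M N f"
  shows "f \<zero>\<^bsub>M\<^esub> = \<zero>\<^bsub>N\<^esub>"
proof -
  interpret M: abelian_group M by fact
  interpret N: abelian_group N by fact
  have c: "f \<zero>\<^bsub>M\<^esub> \<in> carrier N" using assms(3) by (simp add: addmap_def)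
  have "f \<zero>\<^bsub>M\<^esub> = f \<zero>\<^bsub>M\<^esub> \<oplus>\<^bsub>N\<^esub> f \<zero>\<^bsub>M\<^esub>"
    using assms(3) by (metis M.l_zero M.zero_closed addmap_def)
  then show ?thesis using c by (metis N.l_zero N.add.right_cancel N.zero_closed)
qed

lemma addmap_neg:
  assumes "abelian_group M" "abelian_group N" "addmap M N f" "u \<in> carrier M"
  shows "f (\<ominus>\<^bsub>M\<^esub> u) = \<ominus>\<^bsub>N\<^esub> f u"
proof -
  interpret M: abelian_group M by fact
  interpret N: abelian_group N by fact
  have z: "f \<zero>\<^bsub>M\<^esub> = \<zero>\<^bsub>N\<^esub>" by (rule addmap_zero[OF assms(1-3)])
  have c: "f u \<in> carrier N" "f (\<ominus>\<^bsub>M\<^esub> u) \<in> carrier N" using assms by (auto simp add: addmap_def)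
  have "f (u \<oplus>\<^bsub>M\<^esub> \<ominus>\<^bsub>M\<^esub> u) = f u \<oplus>\<^bsub>N\<^esub> f (\<ominus>\<^bsub>M\<^esub> u)"
    using assms(3,4) unfolding addmap_def by simp
  then have "f u \<oplus>\<^bsub>N\<^esub> f (\<ominus>\<^bsub>M\<^esub> u) = \<zero>\<^bsub>N\<^esub>"
    using assms(4) z by (simp add: M.r_neg)
  then show ?thesis using c N.minus_equality N.a_comm by metis
qed

lemma addmap_sg:
  assumes "abelian_group M" "abelian_group N" "addmap M N f" "u \<in> carrier M"
  shows "f (sg M n u) = sg N n (f u)"
  using addmap_neg[OF assms] by (simp add: sg_def)

lemma addmap_finsum:
  assumes "abelian_group M" "abelian_group N" "addmap M N f" "finite A" "h \<in> A \<rightarrow> carrier M"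
  shows "f (finsum M h A) = finsum N (\<lambda>x. f (h x)) A"
  using assms(4,5)
proof (induct A rule: finite_induct)
  case empty then show ?case using addmap_zero[OF assms(1-3)]
    by (simp add: abelian_monoid.finsum_empty[OF abelian_group.axioms(1)[OF assms(1)]]
        abelian_monoid.finsum_empty[OF abelian_group.axioms(1)[OF assms(2)]])
next
  case (insert x F)
  interpret M: abelian_group M by fact
  interpret N: abelian_group N by fact
  have fc: "\<And>u. u \<in> carrier M \<Longrightarrow> f u \<in> carrier N" using assms(3) by (simp add: addmap_def)
  from insert show ?case
    using assms(3) fc by (simp add: Pi_def M.finsum_insert N.finsum_insert M.finsum_closed addmap_def)
qed

locale bcx =
  fixes R :: "'r ring" and X :: "'b set" and idx :: "'b \<Rightarrow> nat"
    and G :: "'b set \<Rightarrow> ('r,'m) module" and Gm :: "'b set \<Rightarrow> 'b set \<Rightarrow> 'm \<Rightarrow> 'm"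
  assumes finX: "finite X"
    and injX: "inj_on idx X"
    and modG: "S \<subseteq> X \<Longrightarrow> module R (G S)"
    and gm_closed: "S \<subseteq> X \<Longrightarrow> x \<in> X \<Longrightarrow> x \<notin> S \<Longrightarrow> u \<in> carrier (G (insert x S))
        \<Longrightarrow> Gm (insert x S) S u \<in> carrier (G S)"
    and gm_add: "S \<subseteq> X \<Longrightarrow> x \<in> X \<Longrightarrow> x \<notin> S \<Longrightarrow> u \<in> carrier (G (insert x S))
        \<Longrightarrow> v \<in> carrier (G (insert x S))
        \<Longrightarrow> Gm (insert x S) S (u \<oplus>\<^bsub>G (insert x S)\<^esub> v) = Gm (insert x S) S u \<oplus>\<^bsub>G S\<^esub> Gm (insert x S) S v"
    and gm_smult: "S \<subseteq> X \<Longrightarrow> x \<in> X \<Longrightarrow> x \<notin> S \<Longrightarrow> r \<in> carrier R \<Longrightarrow> u \<in> carrier (G (insert x S))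
        \<Longrightarrow> Gm (insert x S) S (r \<odot>\<^bsub>G (insert x S)\<^esub> u) = r \<odot>\<^bsub>G S\<^esub> Gm (insert x S) S u"
begin

lemma agG: "S \<subseteq> X \<Longrightarrow> abelian_group (G S)"
  using modG module.axioms(2) by blast

lemma amG: "S \<subseteq> X \<Longrightarrow> abelian_monoid (G S)"
  using agG abelian_group.axioms(1) by blast

lemma crR: "cring R"
  using modG[of "{}"] module.axioms(1) by blast

definition CG :: "nat \<Rightarrow> ('b set \<Rightarrow> 'm) ring" where
  "CG k = \<lparr>carrier = bchains X G k, mult = (\<lambda>_ _. undefined), one = undefined,
           zero = bzero X G k, add = badd X G k\<rparr>"

lemma CG_simps [simp]: "carrier (CG k) = bchains X G k" "zero (CG k) = bzero X G k" "add (CG k) = badd X G k"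
  by (simp_all add: CG_def)



lemma chainsD: "c \<in> bchains X G k \<Longrightarrow> S \<subseteq> X \<Longrightarrow> card S = k \<Longrightarrow> c S \<in> carrier (G S)"
  by (simp add: bchains_def)

lemma chainsD2: "c \<in> bchains X G k \<Longrightarrow> \<not> (S \<subseteq> X \<and> card S = k) \<Longrightarrow> c S = undefined"
  by (simp add: bchains_def)

lemma chainsI: "(\<And>S. S \<subseteq> X \<Longrightarrow> card S = k \<Longrightarrow> c S \<in> carrier (G S)) \<Longrightarrow>
   (\<And>S. \<not> (S \<subseteq> X \<and> card S = k) \<Longrightarrow> c S = undefined) \<Longrightarrow> c \<in> bchains X G k"
  by (simp add: bchains_def)

lemma chains_eqI: "c \<in> bchains X G k \<Longrightarrow> c' \<in> bchains X G k \<Longrightarrow>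
   (\<And>S. S \<subseteq> X \<Longrightarrow> card S = k \<Longrightarrow> c S = c' S) \<Longrightarrow> c = c'"
  by (rule ext) (metis chainsD2)

lemma badd_closed: "c \<in> bchains X G k \<Longrightarrow> c' \<in> bchains X G k \<Longrightarrow> badd X G k c c' \<in> bchains X G k"
  by (rule chainsI) (auto simp: badd_def chainsD abelian_monoid.a_closed[OF amG])

lemma bzero_closed: "bzero X G k \<in> bchains X G k"
  by (rule chainsI) (auto simp: bzero_def abelian_monoid.zero_closed[OF amG])

lemma bsmult_closed: "r \<in> carrier R \<Longrightarrow> c \<in> bchains X G k \<Longrightarrow> bsmult X G k r c \<in> bchains X G k"
  by (rule chainsI) (auto simp: bsmult_def chainsD module.smult_closed[OF modG])

lemma bneg_closed: "c \<in> bchains X G k \<Longrightarrow>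
   (\<lambda>S. if (S \<subseteq> X \<and> card S = k) then \<ominus>\<^bsub>G S\<^esub> c S else undefined) \<in> bchains X G k"
  by (rule chainsI) (auto simp add: chainsD abelian_group.a_inv_closed[OF agG])

lemma bneg_inv: "c \<in> bchains X G k \<Longrightarrow>
   badd X G k (\<lambda>S. if (S \<subseteq> X \<and> card S = k) then \<ominus>\<^bsub>G S\<^esub> c S else undefined) c = bzero X G k"
  unfolding badd_def bzero_def
  by (rule ext) (simp add: chainsD abelian_group.l_neg[OF agG])

lemma CG_ag: "abelian_group (CG k)"
proof (rule abelian_groupI)
  fix x y z assume xyz: "x \<in> carrier (CG k)" "y \<in> carrier (CG k)" "z \<in> carrier (CG k)"
  then show "x \<oplus>\<^bsub>CG k\<^esub> y \<in> carrier (CG k)" by (simp add: badd_closed)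
  show "x \<oplus>\<^bsub>CG k\<^esub> y \<oplus>\<^bsub>CG k\<^esub> z = x \<oplus>\<^bsub>CG k\<^esub> (y \<oplus>\<^bsub>CG k\<^esub> z)"
    using xyz unfolding CG_simps badd_def
    by (intro ext) (simp add: chainsD abelian_monoid.a_closed[OF amG] abelian_monoid.a_assoc[OF amG])
  show "x \<oplus>\<^bsub>CG k\<^esub> y = y \<oplus>\<^bsub>CG k\<^esub> x"
    using xyz unfolding CG_simps badd_def
    by (intro ext) (simp add: chainsD abelian_monoid.a_comm[OF amG])
next
  show "\<zero>\<^bsub>CG k\<^esub> \<in> carrier (CG k)" by (simp add: bzero_closed)
next
  fix x assume x: "x \<in> carrier (CG k)"
  show "\<zero>\<^bsub>CG k\<^esub> \<oplus>\<^bsub>CG k\<^esub> x = x"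
  proof (rule ext)
    fix S show "(\<zero>\<^bsub>CG k\<^esub> \<oplus>\<^bsub>CG k\<^esub> x) S = x S"
      using x unfolding CG_simps badd_def bzero_def
      by (cases "(S \<subseteq> X \<and> card S = k)") (auto simp add: chainsD chainsD2 abelian_monoid.l_zero[OF amG])
  qed
  show "\<exists>y\<in>carrier (CG k). y \<oplus>\<^bsub>CG k\<^esub> x = \<zero>\<^bsub>CG k\<^esub>"
    using x bneg_closed[of x k] bneg_inv[of x k] unfolding CG_simps by blast
qed

lemma bneg_eq: "c \<in> bchains X G k \<Longrightarrow>
   \<ominus>\<^bsub>CG k\<^esub> c = (\<lambda>S. if (S \<subseteq> X \<and> card S = k) then \<ominus>\<^bsub>G S\<^esub> c S else undefined)"
proof -
  assume c: "c \<in> bchains X G k"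
  interpret A: abelian_group "CG k" by (rule CG_ag)
  show ?thesis
    by (rule A.minus_equality) (use c bneg_closed[OF c] bneg_inv[OF c] in simp_all)
qed

abbreviation "D k \<equiv> bdiff X idx G Gm k"

definition dterm :: "('b set \<Rightarrow> 'm) \<Rightarrow> 'b set \<Rightarrow> 'b \<Rightarrow> 'm" where
  "dterm c S b = sg (G S) (card {z \<in> S. idx z < idx b}) (Gm (insert b S) S (c (insert b S)))"

lemma D_val: "S \<subseteq> X \<Longrightarrow> card S = k \<Longrightarrow> D (Suc k) c S = finsum (G S) (dterm c S) (X - S)"
  unfolding bdiff_def dterm_def[abs_def] bsign_sg by simp

lemma D_undef: "\<not> (S \<subseteq> X \<and> card S = k) \<Longrightarrow> D (Suc k) c S = undefined"
  by (auto simp add: bdiff_def)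

lemma ins_ix: "S \<subseteq> X \<Longrightarrow> card S = k \<Longrightarrow> b \<in> X - S \<Longrightarrow> (insert b S \<subseteq> X \<and> card (insert b S) = Suc k)"
  using finX by (auto simp: card_insert_if finite_subset[OF _ finX])

lemma dterm_closed: "c \<in> bchains X G (Suc k) \<Longrightarrow> S \<subseteq> X \<Longrightarrow> card S = k \<Longrightarrow> b \<in> X - S
   \<Longrightarrow> dterm c S b \<in> carrier (G S)"
  unfolding dterm_def
  by (intro abelian_group.sg_closed[OF agG] gm_closed chainsD) (auto dest: ins_ix)

lemma dterm_Pi: "c \<in> bchains X G (Suc k) \<Longrightarrow> S \<subseteq> X \<Longrightarrow> card S = k
   \<Longrightarrow> dterm c S \<in> X - S \<rightarrow> carrier (G S)"
  using dterm_closed by blast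

lemma D_closed: "c \<in> bchains X G (Suc k) \<Longrightarrow> D (Suc k) c \<in> bchains X G k"
  by (rule chainsI) (auto simp: D_val D_undef abelian_monoid.finsum_closed[OF abelian_group.axioms(1)[OF agG]] dterm_Pi)

lemma D_add: "c \<in> bchains X G (Suc k) \<Longrightarrow> c' \<in> bchains X G (Suc k) \<Longrightarrow>
  D (Suc k) (badd X G (Suc k) c c') = badd X G k (D (Suc k) c) (D (Suc k) c')"
proof (rule ext)
  fix S assume c: "c \<in> bchains X G (Suc k)" and c': "c' \<in> bchains X G (Suc k)"
  show "D (Suc k) (badd X G (Suc k) c c') S = badd X G k (D (Suc k) c) (D (Suc k) c') S"
  proof (cases "(S \<subseteq> X \<and> card S = k)")
    case True
    then have S: "S \<subseteq> X" "card S = k" by auto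
    interpret M: abelian_group "G S" using agG S by blast
    have "dterm (badd X G (Suc k) c c') S b = dterm c S b \<oplus>\<^bsub>G S\<^esub> dterm c' S b" if b: "b \<in> X - S" for b
    proof -
      have i: "(insert b S \<subseteq> X \<and> card (insert b S) = Suc k)" using ins_ix S b by blast
      have cc: "c (insert b S) \<in> carrier (G (insert b S))" "c' (insert b S) \<in> carrier (G (insert b S))"
        using i chainsD c c' by auto
      have bb: "b \<in> X" "b \<notin> S" using b by auto
      have "Gm (insert b S) S (badd X G (Suc k) c c' (insert b S)) =
         Gm (insert b S) S (c (insert b S)) \<oplus>\<^bsub>G S\<^esub> Gm (insert b S) S (c' (insert b S))"
        using i gm_add[OF S(1) bb cc] by (simp add: badd_def)
      then show ?thesis unfolding dterm_def
        using i b S gm_closed[OF S(1) bb cc(1)] gm_closed[OF S(1) bb cc(2)] by (simp add: M.sg_add)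
    qed
    then have "finsum (G S) (dterm (badd X G (Suc k) c c') S) (X - S) =
        finsum (G S) (\<lambda>b. dterm c S b \<oplus>\<^bsub>G S\<^esub> dterm c' S b) (X - S)"
      using dterm_closed[OF c S] dterm_closed[OF c' S] by (intro M.finsum_cong') auto
    also have "\<dots> = finsum (G S) (dterm c S) (X - S) \<oplus>\<^bsub>G S\<^esub> finsum (G S) (dterm c' S) (X - S)"
      by (rule M.finsum_addf) (use dterm_Pi[OF c S] dterm_Pi[OF c' S] in auto)
    finally show ?thesis using S True by (simp add: D_val badd_def)
  next
    case False then show ?thesis by (auto simp add: D_undef badd_def)
  qed
qed

lemma D_smult: "r \<in> carrier R \<Longrightarrow> c \<in> bchains X G (Suc k) \<Longrightarrow>
  D (Suc k) (bsmult X G (Suc k) r c) = bsmult X G k r (D (Suc k) c)"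
proof (rule ext)
  fix S assume r: "r \<in> carrier R" and c: "c \<in> bchains X G (Suc k)"
  show "D (Suc k) (bsmult X G (Suc k) r c) S = bsmult X G k r (D (Suc k) c) S"
  proof (cases "(S \<subseteq> X \<and> card S = k)")
    case True
    then have S: "S \<subseteq> X" "card S = k" by auto
    interpret M: module R "G S" using modG S by blast
    have "dterm (bsmult X G (Suc k) r c) S b = r \<odot>\<^bsub>G S\<^esub> dterm c S b" if b: "b \<in> X - S" for b
    proof -
      have i: "(insert b S \<subseteq> X \<and> card (insert b S) = Suc k)" using ins_ix S b by blast
      have cc: "c (insert b S) \<in> carrier (G (insert b S))"
        using i chainsD c by auto
      have bb: "b \<in> X" "b \<notin> S" using b by auto
      have "Gm (insert b S) S (bsmult X G (Suc k) r c (insert b S)) =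
         r \<odot>\<^bsub>G S\<^esub> Gm (insert b S) S (c (insert b S))"
        using i gm_smult[OF S(1) bb r cc] by (simp add: bsmult_def)
      then show ?thesis unfolding dterm_def
        using i b S gm_closed[OF S(1) bb cc(1)] r by (simp add: M.sg_smult)
    qed
    then have "finsum (G S) (dterm (bsmult X G (Suc k) r c) S) (X - S) =
        finsum (G S) (\<lambda>b. r \<odot>\<^bsub>G S\<^esub> dterm c S b) (X - S)"
      using dterm_closed[OF c S] r by (intro M.finsum_cong') auto
    also have "\<dots> = r \<odot>\<^bsub>G S\<^esub> finsum (G S) (dterm c S) (X - S)"
      by (rule M.finsum_smult_ldistr[symmetric]) (use dterm_Pi[OF c S] r finX in auto)
    finally show ?thesis using S True by (simp add: D_val bsmult_def)
  next
    case False then show ?thesis by (auto simp add: D_undef bsmult_def)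
  qed
qed

lemma D_addmap: "addmap (CG (Suc k)) (CG k) (D (Suc k))"
  unfolding addmap_def using D_closed D_add by simp

lemma D_zero: "D (Suc k) (bzero X G (Suc k)) = bzero X G k"
  using addmap_zero[OF CG_ag CG_ag D_addmap] by simp

lemma D_neg: "c \<in> bchains X G (Suc k) \<Longrightarrow> D (Suc k) (\<ominus>\<^bsub>CG (Suc k)\<^esub> c) = \<ominus>\<^bsub>CG k\<^esub> (D (Suc k) c)"
  using addmap_neg[OF CG_ag CG_ag D_addmap] by simp

abbreviation "Bd k \<equiv> bbounds X idx G Gm k"
abbreviation "Zc k \<equiv> bcycles X idx G Gm k"
abbreviation "cos k \<equiv> bcoset X idx G Gm k"

lemma B_sub: "Bd k \<subseteq> bchains X G k"
  unfolding bbounds_def using D_closed by blast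

lemma B_zero: "bzero X G k \<in> Bd k"
  unfolding bbounds_def using D_zero bzero_closed by (metis image_eqI)

lemma B_add: "x \<in> Bd k \<Longrightarrow> y \<in> Bd k \<Longrightarrow> badd X G k x y \<in> Bd k"
proof -
  assume "x \<in> Bd k" "y \<in> Bd k"
  then obtain x' y' where "x' \<in> bchains X G (Suc k)" "x = D (Suc k) x'" "y' \<in> bchains X G (Suc k)" "y = D (Suc k) y'"
    unfolding bbounds_def by auto
  then show ?thesis unfolding bbounds_def
    by (intro image_eqI[where x = "badd X G (Suc k) x' y'"]) (simp_all add: D_add badd_closed)
qed

lemma B_neg: "x \<in> Bd k \<Longrightarrow> \<ominus>\<^bsub>CG k\<^esub> x \<in> Bd k"
proof -
  assume "x \<in> Bd k"
  then obtain y where y: "y \<in> bchains X G (Suc k)" "x = D (Suc k) y" unfolding bbounds_def by auto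
  interpret A: abelian_group "CG (Suc k)" by (rule CG_ag)
  have "\<ominus>\<^bsub>CG (Suc k)\<^esub> y \<in> bchains X G (Suc k)" using y A.a_inv_closed by simp
  then show ?thesis unfolding bbounds_def
    by (intro image_eqI[where x = "\<ominus>\<^bsub>CG (Suc k)\<^esub> y"]) (simp_all add: D_neg y)
qed

lemma B_smult: "r \<in> carrier R \<Longrightarrow> x \<in> Bd k \<Longrightarrow> bsmult X G k r x \<in> Bd k"
proof -
  assume r: "r \<in> carrier R" and "x \<in> Bd k"
  then obtain x' where "x' \<in> bchains X G (Suc k)" "x = D (Suc k) x'"
    unfolding bbounds_def by auto
  then show ?thesis unfolding bbounds_def
    by (intro image_eqI[where x = "bsmult X G (Suc k) r x'"]) (simp_all add: D_smult bsmult_closed r)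
qed

lemma Z_sub: "Zc k \<subseteq> bchains X G k"
  unfolding bcycles_def by auto

lemma Z_diff: "x \<in> Zc k \<Longrightarrow> y \<in> Zc k \<Longrightarrow> x \<ominus>\<^bsub>CG k\<^esub> y \<in> Zc k"
proof -
  assume x: "x \<in> Zc k" and y: "y \<in> Zc k"
  interpret A: abelian_group "CG k" by (rule CG_ag)
  have xc: "x \<in> bchains X G k" and yc: "y \<in> bchains X G k" using x y Z_sub by auto
  have dc: "x \<ominus>\<^bsub>CG k\<^esub> y \<in> bchains X G k" using xc yc A.minus_closed by simp
  show ?thesis
  proof (cases k)
    case 0 then show ?thesis using dc by (simp add: bcycles_def)
  next
    case (Suc k')
    interpret A': abelian_group "CG k'" by (rule CG_ag)
    have "D (Suc k') x = bzero X G k'" "D (Suc k') y = bzero X G k'"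
      using x y Suc by (auto simp: bcycles_def)
    moreover have z: "badd X G k' (bzero X G k') (\<ominus>\<^bsub>CG k'\<^esub> bzero X G k') = bzero X G k'"
      using A'.r_neg[of "\<zero>\<^bsub>CG k'\<^esub>"] A'.zero_closed by (simp only: CG_simps)
    ultimately have "D (Suc k') (x \<ominus>\<^bsub>CG k\<^esub> y) = bzero X G k'"
      using xc yc Suc A.a_inv_closed[of y] D_add[of x k' "\<ominus>\<^bsub>CG k\<^esub> y"] D_neg[of y k']
      by (simp add: a_minus_def)
    then show ?thesis using dc Suc by (simp add: bcycles_def)
  qed
qed

lemma cos_shift: "x \<in> bchains X G k \<Longrightarrow> b \<in> Bd k \<Longrightarrow> cos k (badd X G k x b) = cos k x"
proof -
  assume x: "x \<in> bchains X G k" and b: "b \<in> Bd k"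
  interpret A: abelian_group "CG k" by (rule CG_ag)
  have bc: "b \<in> bchains X G k" using b B_sub by auto
  show ?thesis unfolding bcoset_def
  proof
    show "badd X G k (badd X G k x b) ` Bd k \<subseteq> badd X G k x ` Bd k"
    proof
      fix z assume "z \<in> badd X G k (badd X G k x b) ` Bd k"
      then obtain b' where b': "b' \<in> Bd k" "z = badd X G k (badd X G k x b) b'" by auto
      have "z = badd X G k x (badd X G k b b')"
        using b' x bc B_sub A.a_assoc[of x b b'] by auto
      then show "z \<in> badd X G k x ` Bd k" using B_add b b' by auto
    qed
  next
    show "badd X G k x ` Bd k \<subseteq> badd X G k (badd X G k x b) ` Bd k"
    proof
      fix z assume "z \<in> badd X G k x ` Bd k"
      then obtain b' where b': "b' \<in> Bd k" "z = badd X G k x b'" by auto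
      have b'c: "b' \<in> bchains X G k" using b' B_sub by auto
      have nb: "\<ominus>\<^bsub>CG k\<^esub> b \<in> bchains X G k" using bc A.a_inv_closed by simp
      have "badd X G k b (badd X G k (\<ominus>\<^bsub>CG k\<^esub> b) b') = b'"
        using bc b'c nb A.a_assoc[of b "\<ominus>\<^bsub>CG k\<^esub> b" b'] A.r_neg[of b] A.l_zero[of b'] by simp
      then have "z = badd X G k (badd X G k x b) (badd X G k (\<ominus>\<^bsub>CG k\<^esub> b) b')"
        using b' x bc nb b'c A.a_assoc[of x b] badd_closed by simp
      moreover have "badd X G k (\<ominus>\<^bsub>CG k\<^esub> b) b' \<in> Bd k" using B_add B_neg b b' by auto
      ultimately show "z \<in> badd X G k (badd X G k x b) ` Bd k" by auto
    qed
  qed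
qed

lemma cos_self: "x \<in> bchains X G k \<Longrightarrow> x \<in> cos k x"
proof -
  assume x: "x \<in> bchains X G k"
  interpret A: abelian_group "CG k" by (rule CG_ag)
  have "badd X G k x (bzero X G k) = x" using x A.r_zero by simp
  then show ?thesis unfolding bcoset_def using B_zero by (metis image_eqI)
qed

lemma cos_mem: "x \<in> bchains X G k \<Longrightarrow> y \<in> cos k x \<Longrightarrow> \<exists>b\<in>Bd k. y = badd X G k x b"
  unfolding bcoset_def by auto

lemma cos_some: "x \<in> bchains X G k \<Longrightarrow> \<exists>b\<in>Bd k. (SOME p. p \<in> cos k x) = badd X G k x b"
  using cos_self cos_mem by (metis someI)

lemma cos_eq_iff: "x \<in> bchains X G k \<Longrightarrow> y \<in> bchains X G k \<Longrightarrow>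
    cos k x = cos k y \<longleftrightarrow> x \<ominus>\<^bsub>CG k\<^esub> y \<in> Bd k"
proof -
  assume x: "x \<in> bchains X G k" and y: "y \<in> bchains X G k"
  interpret A: abelian_group "CG k" by (rule CG_ag)
  show ?thesis
  proof
    assume "cos k x = cos k y"
    then have "x \<in> cos k y" using cos_self x by auto
    then obtain b where b: "b \<in> Bd k" "x = badd X G k y b" using cos_mem y by blast
    have bc: "b \<in> bchains X G k" using b B_sub by auto
    have "x \<ominus>\<^bsub>CG k\<^esub> y = b" using b(2) y bc
      by (simp add: a_minus_def) (metis A.a_comm A.a_assoc A.r_neg A.r_zero A.a_inv_closed CG_simps)
    then show "x \<ominus>\<^bsub>CG k\<^esub> y \<in> Bd k" using b by simp
  next
    assume d: "x \<ominus>\<^bsub>CG k\<^esub> y \<in> Bd k"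
    have "badd X G k y (x \<ominus>\<^bsub>CG k\<^esub> y) = x" using x y
      by (simp add: a_minus_def) (metis A.a_comm A.a_assoc A.l_neg A.l_zero A.a_inv_closed CG_simps)
    then show "cos k x = cos k y" using cos_shift[OF y d] by simp
  qed
qed

lemma HC_carrier: "carrier (HC X idx G Gm k) = cos k ` Zc k"
  by (simp add: HC_def)

lemma HC_add: "x \<in> bchains X G k \<Longrightarrow> y \<in> bchains X G k \<Longrightarrow>
   add (HC X idx G Gm k) (cos k x) (cos k y) = cos k (badd X G k x y)"
proof -
  assume x: "x \<in> bchains X G k" and y: "y \<in> bchains X G k"
  interpret A: abelian_group "CG k" by (rule CG_ag)
  obtain b1 where b1: "b1 \<in> Bd k" "(SOME p. p \<in> cos k x) = badd X G k x b1" using cos_some[OF x] by blast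
  obtain b2 where b2: "b2 \<in> Bd k" "(SOME p. p \<in> cos k y) = badd X G k y b2" using cos_some[OF y] by blast
  have c: "b1 \<in> bchains X G k" "b2 \<in> bchains X G k" using b1 b2 B_sub by auto
  have "badd X G k (badd X G k x b1) (badd X G k y b2) = badd X G k (badd X G k x y) (badd X G k b1 b2)"
    unfolding badd_def using x y c
    by (intro ext) (auto simp: chainsD abelian_monoid.a_ac[OF amG] abelian_monoid.a_closed[OF amG])
  then show ?thesis using b1 b2 cos_shift[where x="badd X G k x y" and b="badd X G k b1 b2"] B_add x y badd_closed
    by (simp add: HC_def)
qed

lemma HC_smult: "r \<in> carrier R \<Longrightarrow> x \<in> bchains X G k \<Longrightarrow>
   smult (HC X idx G Gm k) r (cos k x) = cos k (bsmult X G k r x)"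
proof -
  assume r: "r \<in> carrier R" and x: "x \<in> bchains X G k"
  obtain b1 where b1: "b1 \<in> Bd k" "(SOME p. p \<in> cos k x) = badd X G k x b1" using cos_some[OF x] by blast
  have c: "b1 \<in> bchains X G k" using b1 B_sub by auto
  have "bsmult X G k r (badd X G k x b1) = badd X G k (bsmult X G k r x) (bsmult X G k r b1)"
  proof (rule ext)
    fix S show "bsmult X G k r (badd X G k x b1) S = badd X G k (bsmult X G k r x) (bsmult X G k r b1) S"
    proof (cases "S \<subseteq> X \<and> card S = k")
      case True
      then show ?thesis unfolding bsmult_def badd_def
        using module.smult_r_distr[OF modG[of S] r chainsD[OF x] chainsD[OF c]] by simp
    qed (auto simp: bsmult_def badd_def)
  qed
  then show ?thesis using b1 cos_shift[where x="bsmult X G k r x" and b="bsmult X G k r b1"] B_smult[OF r b1(1)]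
      bsmult_closed[OF r x] by (simp add: HC_def)
qed

end

lemma hc_iso:
  assumes C: "bcx R X idx G Gm" and D': "bcx R X' idx' G' Gm'"
  and f_closed: "\<And>c. c \<in> bchains X G k \<Longrightarrow> f c \<in> bchains X' G' k"
  and f_add: "\<And>c c'. c \<in> bchains X G k \<Longrightarrow> c' \<in> bchains X G k \<Longrightarrow>
      f (badd X G k c c') = badd X' G' k (f c) (f c')"
  and f_smult: "\<And>r c. r \<in> carrier R \<Longrightarrow> c \<in> bchains X G k \<Longrightarrow>
      f (bsmult X G k r c) = bsmult X' G' k r (f c)"
  and f_B: "\<And>c. c \<in> bbounds X idx G Gm k \<Longrightarrow> f c \<in> bbounds X' idx' G' Gm' k"
  and f_Z: "\<And>c. c \<in> bcycles X idx G Gm k \<Longrightarrow> f c \<in> bcycles X' idx' G' Gm' k"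
  and f_inj: "\<And>c. c \<in> bcycles X idx G Gm k \<Longrightarrow> f c \<in> bbounds X' idx' G' Gm' k \<Longrightarrow>
      c \<in> bbounds X idx G Gm k"
  and f_surj: "\<And>c'. c' \<in> bcycles X' idx' G' Gm' k \<Longrightarrow>
      \<exists>c\<in>bcycles X idx G Gm k. bcoset X' idx' G' Gm' k c' = bcoset X' idx' G' Gm' k (f c)"
  shows "mod_isomorphic R (HC X idx G Gm k) (HC X' idx' G' Gm' k)"
proof -
  interpret C: bcx R X idx G Gm by (rule C)
  interpret D: bcx R X' idx' G' Gm' by (rule D')
  interpret A: abelian_group "C.CG k" by (rule C.CG_ag)
  interpret B: abelian_group "D.CG k" by (rule D.CG_ag)
  have am: "addmap (C.CG k) (D.CG k) f" unfolding addmap_def using f_closed f_add by simp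
  have f_minus: "f (x \<ominus>\<^bsub>C.CG k\<^esub> y) = f x \<ominus>\<^bsub>D.CG k\<^esub> f y"
    if "x \<in> bchains X G k" "y \<in> bchains X G k" for x y
    using that addmap_neg[OF C.CG_ag D.CG_ag am, of y] f_add[of x "\<ominus>\<^bsub>C.CG k\<^esub> y"] A.a_inv_closed[of y]
    by (simp add: a_minus_def)
  define h where "h P = D.cos k (f (SOME p. p \<in> P))" for P
  have hcos: "h (C.cos k x) = D.cos k (f x)" if x: "x \<in> bchains X G k" for x
  proof -
    obtain b where b: "b \<in> C.Bd k" "(SOME p. p \<in> C.cos k x) = badd X G k x b"
      using C.cos_some[OF x] by blast
    have bc: "b \<in> bchains X G k" using b C.B_sub by auto
    have "h (C.cos k x) = D.cos k (badd X' G' k (f x) (f b))" unfolding h_def using b f_add[OF x bc] by simp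
    also have "\<dots> = D.cos k (f x)" by (rule D.cos_shift) (use f_closed x f_B b in auto)
    finally show ?thesis .
  qed
  have Zs: "\<And>z. z \<in> C.Zc k \<Longrightarrow> z \<in> bchains X G k" using C.Z_sub by auto
  have Zs': "\<And>z. z \<in> D.Zc k \<Longrightarrow> z \<in> bchains X' G' k" using D.Z_sub by auto
  have bij: "bij_betw h (carrier (HC X idx G Gm k)) (carrier (HC X' idx' G' Gm' k))"
    unfolding bij_betw_def C.HC_carrier D.HC_carrier
  proof
    show "inj_on h (C.cos k ` C.Zc k)"
    proof (rule inj_onI)
      fix P Q assume P: "P \<in> C.cos k ` C.Zc k" and Q: "Q \<in> C.cos k ` C.Zc k" and e: "h P = h Q"
      obtain z1 where z1: "z1 \<in> C.Zc k" "P = C.cos k z1" using P by auto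
      obtain z2 where z2: "z2 \<in> C.Zc k" "Q = C.cos k z2" using Q by auto
      have "D.cos k (f z1) = D.cos k (f z2)" using e z1 z2 hcos Zs by simp
      then have "f z1 \<ominus>\<^bsub>D.CG k\<^esub> f z2 \<in> D.Bd k"
        using D.cos_eq_iff f_closed Zs z1 z2 by blast
      then have "f (z1 \<ominus>\<^bsub>C.CG k\<^esub> z2) \<in> D.Bd k" using f_minus Zs z1 z2 by simp
      then have "z1 \<ominus>\<^bsub>C.CG k\<^esub> z2 \<in> C.Bd k" using f_inj C.Z_diff z1 z2 by blast
      then show "P = Q" using C.cos_eq_iff Zs z1 z2 by blast
    qed
  next
    show "h ` C.cos k ` C.Zc k = D.cos k ` D.Zc k"
    proof
      show "h ` C.cos k ` C.Zc k \<subseteq> D.cos k ` D.Zc k"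
        using hcos Zs f_Z by auto
    next
      show "D.cos k ` D.Zc k \<subseteq> h ` C.cos k ` C.Zc k"
      proof
        fix P assume "P \<in> D.cos k ` D.Zc k"
        then obtain c' where c': "c' \<in> D.Zc k" "P = D.cos k c'" by auto
        obtain c where c: "c \<in> C.Zc k" "D.cos k c' = D.cos k (f c)" using f_surj c' by blast
        have "P = h (C.cos k c)" using c c' hcos Zs by simp
        then show "P \<in> h ` C.cos k ` C.Zc k" using c by blast
      qed
    qed
  qed
  show ?thesis unfolding mod_isomorphic_def
  proof (intro exI conjI ballI)
    show "bij_betw h (carrier (HC X idx G Gm k)) (carrier (HC X' idx' G' Gm' k))" by (rule bij)
  next
    fix P Q assume P: "P \<in> carrier (HC X idx G Gm k)" and Q: "Q \<in> carrier (HC X idx G Gm k)"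
    obtain z1 where z1: "z1 \<in> C.Zc k" "P = C.cos k z1" using P C.HC_carrier by auto
    obtain z2 where z2: "z2 \<in> C.Zc k" "Q = C.cos k z2" using Q C.HC_carrier by auto
    have c: "z1 \<in> bchains X G k" "z2 \<in> bchains X G k" using z1 z2 Zs by auto
    show "h (P \<oplus>\<^bsub>HC X idx G Gm k\<^esub> Q) = h P \<oplus>\<^bsub>HC X' idx' G' Gm' k\<^esub> h Q"
      using z1 z2 c C.HC_add D.HC_add hcos f_add f_closed C.badd_closed by simp
  next
    fix r P assume r: "r \<in> carrier R" and P: "P \<in> carrier (HC X idx G Gm k)"
    obtain z1 where z1: "z1 \<in> C.Zc k" "P = C.cos k z1" using P C.HC_carrier by auto
    have c: "z1 \<in> bchains X G k" using z1 Zs by auto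
    show "h (r \<odot>\<^bsub>HC X idx G Gm k\<^esub> P) = r \<odot>\<^bsub>HC X' idx' G' Gm' k\<^esub> h P"
      using z1 c r C.HC_smult D.HC_smult hcos f_smult f_closed C.bsmult_closed by simp
  qed
qed

lemma mod_iso_trans: "mod_isomorphic R A B \<Longrightarrow> mod_isomorphic R B C \<Longrightarrow> mod_isomorphic R A C"
  unfolding mod_isomorphic_def
proof (elim exE conjE, intro exI conjI ballI)
  fix h g
  assume h: "bij_betw h (carrier A) (carrier B)" "\<forall>P\<in>carrier A. \<forall>Q\<in>carrier A. h (P \<oplus>\<^bsub>A\<^esub> Q) = h P \<oplus>\<^bsub>B\<^esub> h Q"
      "\<forall>r\<in>carrier R. \<forall>P\<in>carrier A. h (r \<odot>\<^bsub>A\<^esub> P) = r \<odot>\<^bsub>B\<^esub> h P"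
    and g: "bij_betw g (carrier B) (carrier C)" "\<forall>P\<in>carrier B. \<forall>Q\<in>carrier B. g (P \<oplus>\<^bsub>B\<^esub> Q) = g P \<oplus>\<^bsub>C\<^esub> g Q"
      "\<forall>r\<in>carrier R. \<forall>P\<in>carrier B. g (r \<odot>\<^bsub>B\<^esub> P) = r \<odot>\<^bsub>C\<^esub> g P"
  show "bij_betw (g \<circ> h) (carrier A) (carrier C)" using h g bij_betw_trans by blast
  have hm: "\<And>P. P \<in> carrier A \<Longrightarrow> h P \<in> carrier B" using h(1) bij_betwE by blast
  show "(g \<circ> h) (P \<oplus>\<^bsub>A\<^esub> Q) = (g \<circ> h) P \<oplus>\<^bsub>C\<^esub> (g \<circ> h) Q"
    if "P \<in> carrier A" "Q \<in> carrier A" for P Q using that h g hm by simp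
  show "(g \<circ> h) (r \<odot>\<^bsub>A\<^esub> P) = r \<odot>\<^bsub>C\<^esub> (g \<circ> h) P"
    if "r \<in> carrier R" "P \<in> carrier A" for r P using that h g hm by simp
qed

locale ysh =
  fixes R :: "'r ring" and Y :: "'c set" and H :: "'c set \<Rightarrow> ('r,'m) module"
    and Hm :: "'c set \<Rightarrow> 'c set \<Rightarrow> 'm \<Rightarrow> 'm"
  assumes modH: "U \<subseteq> Y \<Longrightarrow> module R (H U)"
    and hm_closed: "V \<subseteq> U \<Longrightarrow> U \<subseteq> Y \<Longrightarrow> u \<in> carrier (H U) \<Longrightarrow> Hm U V u \<in> carrier (H V)"
    and hm_add: "V \<subseteq> U \<Longrightarrow> U \<subseteq> Y \<Longrightarrow> u \<in> carrier (H U) \<Longrightarrow> v \<in> carrier (H U) \<Longrightarrow>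
        Hm U V (u \<oplus>\<^bsub>H U\<^esub> v) = Hm U V u \<oplus>\<^bsub>H V\<^esub> Hm U V v"
    and hm_smult: "V \<subseteq> U \<Longrightarrow> U \<subseteq> Y \<Longrightarrow> r \<in> carrier R \<Longrightarrow> u \<in> carrier (H U) \<Longrightarrow>
        Hm U V (r \<odot>\<^bsub>H U\<^esub> u) = r \<odot>\<^bsub>H V\<^esub> Hm U V u"
    and hm_id: "U \<subseteq> Y \<Longrightarrow> u \<in> carrier (H U) \<Longrightarrow> Hm U U u = u"
begin

lemma pb_bcx: "finite X \<Longrightarrow> inj_on idx X \<Longrightarrow> g ` X \<subseteq> Y \<Longrightarrow>
   bcx R X idx (\<lambda>S. H (g ` S)) (\<lambda>T S. Hm (g ` T) (g ` S))"
  unfolding bcx_def by (intro conjI allI impI) (auto intro!: modH hm_closed hm_add hm_smult)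

lemma hm_addmap: "V \<subseteq> U \<Longrightarrow> U \<subseteq> Y \<Longrightarrow> addmap (H U) (H V) (Hm U V)"
  unfolding addmap_def using hm_closed hm_add by auto

lemma agH: "U \<subseteq> Y \<Longrightarrow> abelian_group (H U)"
  using modH module.axioms(2) by blast

lemma hm_zero: "V \<subseteq> U \<Longrightarrow> U \<subseteq> Y \<Longrightarrow> Hm U V \<zero>\<^bsub>H U\<^esub> = \<zero>\<^bsub>H V\<^esub>"
  using addmap_zero[OF agH agH hm_addmap] by (meson order_trans)

lemma hm_sg: "V \<subseteq> U \<Longrightarrow> U \<subseteq> Y \<Longrightarrow> u \<in> carrier (H U) \<Longrightarrow> Hm U V (sg (H U) n u) = sg (H V) n (Hm U V u)"
  using addmap_sg[OF agH agH hm_addmap] by (meson order_trans)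

lemma lin2: "V \<subseteq> U \<Longrightarrow> U \<subseteq> Y \<Longrightarrow> u \<in> carrier (H U) \<Longrightarrow> v \<in> carrier (H U) \<Longrightarrow>
  sg (H V) n (Hm U V (u \<oplus>\<^bsub>H U\<^esub> sg (H U) m v)) =
  sg (H V) n (Hm U V u) \<oplus>\<^bsub>H V\<^esub> sg (H V) (n + m) (Hm U V v)"
proof -
  assume a: "V \<subseteq> U" "U \<subseteq> Y" "u \<in> carrier (H U)" "v \<in> carrier (H U)"
  interpret MU: abelian_group "H U" using agH a by blast
  interpret MV: abelian_group "H V" using agH a by blast
  have "Hm U V (u \<oplus>\<^bsub>H U\<^esub> sg (H U) m v) = Hm U V u \<oplus>\<^bsub>H V\<^esub> sg (H V) m (Hm U V v)"
    using a by (simp add: hm_add hm_sg)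
  then show ?thesis using a hm_closed by (simp add: MV.sg_add MV.sg_sg)
qed

end

definition cnt :: "('b \<Rightarrow> nat) \<Rightarrow> 'b set \<Rightarrow> 'b \<Rightarrow> nat" where
  "cnt idx S x = card {z \<in> S. idx z < idx x}"

lemma cnt_ins: "finite T \<Longrightarrow> x \<notin> T \<Longrightarrow> cnt idx (insert x T) y = cnt idx T y + (if idx x < idx y then 1 else 0)"
proof -
  assume T: "finite T" "x \<notin> T"
  show ?thesis
  proof (cases "idx x < idx y")
    case True
    then have "{z \<in> insert x T. idx z < idx y} = insert x {z \<in> T. idx z < idx y}" by auto
    then show ?thesis using T True by (simp add: cnt_def)
  next
    case False
    then have "{z \<in> insert x T. idx z < idx y} = {z \<in> T. idx z < idx y}" by auto
    then show ?thesis using T False by (simp add: cnt_def)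
  qed
qed

declare image_insert[simp del]

locale stp = ysh R Y H Hm for R :: "'r ring" and Y :: "'c set" and H :: "'c set \<Rightarrow> ('r,'m) module" and Hm :: "'c set \<Rightarrow> 'c set \<Rightarrow> 'm \<Rightarrow> 'm" +
  fixes X :: "'b set" and idx :: "'b \<Rightarrow> nat" and g :: "'b \<Rightarrow> 'c" and b b' :: 'b
  assumes finX: "finite X" and injX: "inj_on idx X" and gX: "g ` X \<subseteq> Y"
    and bX: "b \<in> X" and b'X: "b' \<in> X" and bb': "b \<noteq> b'" and gbb: "g b = g b'"
begin

abbreviation "GG S \<equiv> H (g ` S)"
abbreviation "GGm T S \<equiv> Hm (g ` T) (g ` S)"
abbreviation "X' \<equiv> X - {b'}"

sublocale C: bcx R X idx GG GGm
  by (rule pb_bcx) (use finX injX gX in auto)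

sublocale E: bcx R X' idx GG GGm
  by (rule pb_bcx) (use finX injX gX in \<open>auto intro: inj_on_subset\<close>)

definition eps :: "'b set \<Rightarrow> nat" where "eps T = cnt idx T b + cnt idx T b'"

definition pmap :: "nat \<Rightarrow> ('b set \<Rightarrow> 'm) \<Rightarrow> 'b set \<Rightarrow> 'm" where
  "pmap k c = (\<lambda>S. if S \<subseteq> X' \<and> card S = k then
      (if b \<in> S then c S \<oplus>\<^bsub>GG S\<^esub> sg (GG S) (eps (S - {b})) (c (insert b' (S - {b}))) else c S)
      else undefined)"

definition imap :: "nat \<Rightarrow> ('b set \<Rightarrow> 'm) \<Rightarrow> 'b set \<Rightarrow> 'm" where
  "imap k c = (\<lambda>S. if S \<subseteq> X \<and> card S = k then (if b' \<in> S then \<zero>\<^bsub>GG S\<^esub> else c S) else undefined)"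

definition hmap :: "nat \<Rightarrow> ('b set \<Rightarrow> 'm) \<Rightarrow> 'b set \<Rightarrow> 'm" where
  "hmap k c = (\<lambda>S. if S \<subseteq> X \<and> card S = Suc k then
      (if b \<in> S \<and> b' \<in> S then sg (GG S) (cnt idx (S - {b}) b) (c (S - {b})) else \<zero>\<^bsub>GG S\<^esub>)
      else undefined)"

lemma gsub: "S \<subseteq> X \<Longrightarrow> g ` S \<subseteq> Y" using gX by auto

lemma gb'S: "b \<in> S \<Longrightarrow> g b' \<in> g ` S"
  using gbb by (metis imageI)

lemma gbS: "b' \<in> S \<Longrightarrow> g b \<in> g ` S"
  using gbb by (metis imageI)

lemma g_swap: "b \<in> S \<Longrightarrow> g ` insert b' (S - {b}) = g ` S"
proof -
  assume "b \<in> S"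
  then have "S = insert b (S - {b})" by auto
  then have "g ` S = insert (g b) (g ` (S - {b}))" by (metis image_insert)
  then show ?thesis using gbb by (simp add: image_insert)
qed

lemma g_ins_b': "b \<in> S \<Longrightarrow> g ` insert b' S = g ` S"
  using gb'S by (simp add: insert_absorb image_insert)

lemma g_ins_b: "b' \<in> S \<Longrightarrow> g ` insert b S = g ` S"
  using gbS by (simp add: insert_absorb image_insert)

lemma g_rem_b: "b' \<in> S \<Longrightarrow> g ` (S - {b}) = g ` S"
proof -
  assume a: "b' \<in> S"
  then have "b' \<in> S - {b}" using bb' by auto
  then have "g ` insert b (S - {b}) = g ` (S - {b})" using g_ins_b by blast
  moreover have "insert b (S - {b}) = insert b S" by auto
  ultimately show ?thesis using g_ins_b[OF a] by simp
qed

lemma finS: "S \<subseteq> X \<Longrightarrow> finite S" using finX finite_subset by blast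

lemma card_swap: "S \<subseteq> X' \<Longrightarrow> b \<in> S \<Longrightarrow> card (insert b' (S - {b})) = card S"
proof -
  assume S: "S \<subseteq> X'" "b \<in> S"
  have f: "finite S" using finS[of S] S by auto
  have "b' \<notin> S - {b}" using S by auto
  then have "card (insert b' (S - {b})) = Suc (card (S - {b}))" using f by simp
  also have "\<dots> = card S" using card_Suc_Diff1[OF f S(2)] .
  finally show ?thesis .
qed

lemma pmap_closed: "c \<in> bchains X GG k \<Longrightarrow> pmap k c \<in> bchains X' GG k"
proof (rule E.chainsI)
  fix S assume c: "c \<in> bchains X GG k" and S: "S \<subseteq> X'" "card S = k"
  have SX: "S \<subseteq> X" using S by auto
  interpret M: abelian_group "GG S" using E.agG S(1) by blast
  show "pmap k c S \<in> carrier (GG S)"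
  proof (cases "b \<in> S")
    case True
    have "insert b' (S - {b}) \<subseteq> X" using SX b'X by auto
    then have "c (insert b' (S - {b})) \<in> carrier (GG (insert b' (S - {b})))"
      by (rule C.chainsD[OF c]) (use card_swap[OF S(1) True] S in simp)
    then have "c (insert b' (S - {b})) \<in> carrier (GG S)"
      using g_swap[OF True] by simp
    then show ?thesis using True S C.chainsD[OF c SX] by (simp add: pmap_def)
  next
    case False then show ?thesis using S C.chainsD[OF c SX] by (simp add: pmap_def)
  qed
next
  fix S assume "\<not> (S \<subseteq> X' \<and> card S = k)" then show "pmap k c S = undefined" by (auto simp add: pmap_def)
qed

lemma swap_in: "c \<in> bchains X GG k \<Longrightarrow> S \<subseteq> X' \<Longrightarrow> card S = k \<Longrightarrow> b \<in> S \<Longrightarrow>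
   c (insert b' (S - {b})) \<in> carrier (GG S)"
proof -
  assume c: "c \<in> bchains X GG k" and S: "S \<subseteq> X'" "card S = k" and bS: "b \<in> S"
  have "insert b' (S - {b}) \<subseteq> X" using S b'X by auto
  then have "c (insert b' (S - {b})) \<in> carrier (GG (insert b' (S - {b})))"
    by (rule C.chainsD[OF c]) (use card_swap[OF S(1) bS] S in simp)
  then show ?thesis using g_swap[OF bS] by simp
qed

lemma pmap_add: "c \<in> bchains X GG k \<Longrightarrow> c' \<in> bchains X GG k \<Longrightarrow>
   pmap k (badd X GG k c c') = badd X' GG k (pmap k c) (pmap k c')"
proof (rule ext)
  fix S assume c: "c \<in> bchains X GG k" and c': "c' \<in> bchains X GG k"
  show "pmap k (badd X GG k c c') S = badd X' GG k (pmap k c) (pmap k c') S"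
  proof (cases "S \<subseteq> X' \<and> card S = k")
    case True
    then have S: "S \<subseteq> X'" "card S = k" by auto
    have SX: "S \<subseteq> X" using S by auto
    interpret M: abelian_group "GG S" using E.agG S(1) by blast
    show ?thesis
    proof (cases "b \<in> S")
      case bS: True
      let ?U = "insert b' (S - {b})"
      have U: "?U \<subseteq> X" "card ?U = k" using S b'X card_swap[OF S(1) bS] by auto
      have cc: "c S \<in> carrier (GG S)" "c' S \<in> carrier (GG S)"
        "c ?U \<in> carrier (GG S)" "c' ?U \<in> carrier (GG S)"
        using C.chainsD[OF c SX S(2)] C.chainsD[OF c' SX S(2)] swap_in[OF c S bS] swap_in[OF c' S bS] by auto
      have "badd X GG k c c' ?U = c ?U \<oplus>\<^bsub>GG S\<^esub> c' ?U"
        using U g_swap[OF bS] by (simp add: badd_def)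
      then show ?thesis using True bS cc U SX
        by (simp add: pmap_def badd_def M.sg_add M.a_ac)
    next
      case False
      then show ?thesis using True SX by (simp add: pmap_def badd_def)
    qed
  next
    case False
    then show ?thesis by (auto simp: pmap_def badd_def)
  qed
qed

lemma pmap_smult: "r \<in> carrier R \<Longrightarrow> c \<in> bchains X GG k \<Longrightarrow>
   pmap k (bsmult X GG k r c) = bsmult X' GG k r (pmap k c)"
proof (rule ext)
  fix S assume r: "r \<in> carrier R" and c: "c \<in> bchains X GG k"
  show "pmap k (bsmult X GG k r c) S = bsmult X' GG k r (pmap k c) S"
  proof (cases "S \<subseteq> X' \<and> card S = k")
    case True
    then have S: "S \<subseteq> X'" "card S = k" by auto
    have SX: "S \<subseteq> X" using S by auto
    interpret M: module R "GG S" using E.modG S(1) by blast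
    show ?thesis
    proof (cases "b \<in> S")
      case bS: True
      let ?U = "insert b' (S - {b})"
      have U: "?U \<subseteq> X" "card ?U = k" using S b'X card_swap[OF S(1) bS] by auto
      have cc: "c S \<in> carrier (GG S)" "c ?U \<in> carrier (GG S)"
        using C.chainsD[OF c SX S(2)] swap_in[OF c S bS] by auto
      have "bsmult X GG k r c ?U = r \<odot>\<^bsub>GG S\<^esub> c ?U"
        using U g_swap[OF bS] by (simp add: bsmult_def)
      then show ?thesis using True bS cc U SX r
        by (simp add: pmap_def bsmult_def M.sg_smult M.smult_r_distr)
    next
      case False
      then show ?thesis using True SX by (simp add: pmap_def bsmult_def)
    qed
  next
    case False
    then show ?thesis by (auto simp: pmap_def bsmult_def)
  qed
qed

lemma imap_closed: "c \<in> bchains X' GG k \<Longrightarrow> imap k c \<in> bchains X GG k"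
proof (rule C.chainsI)
  fix S assume c: "c \<in> bchains X' GG k" and S: "S \<subseteq> X" "card S = k"
  interpret M: abelian_group "GG S" using C.agG S(1) by blast
  show "imap k c S \<in> carrier (GG S)"
    using S E.chainsD[OF c, of S] by (auto simp: imap_def)
next
  fix S assume "\<not> (S \<subseteq> X \<and> card S = k)" then show "imap k c S = undefined" by (auto simp add: imap_def)
qed

lemma pmap_imap: "c \<in> bchains X' GG k \<Longrightarrow> pmap k (imap k c) = c"
proof (rule E.chains_eqI)
  assume c: "c \<in> bchains X' GG k"
  show "pmap k (imap k c) \<in> bchains X' GG k" using pmap_closed imap_closed c by blast
  show "c \<in> bchains X' GG k" by fact
  fix S assume S: "S \<subseteq> X'" "card S = k"
  interpret M: abelian_group "GG S" using E.agG S(1) by blast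
  show "pmap k (imap k c) S = c S"
  proof (cases "b \<in> S")
    case bS: True
    let ?U = "insert b' (S - {b})"
    have U: "?U \<subseteq> X" "card ?U = k" using S b'X card_swap[OF S(1) bS] by auto
    have "b' \<notin> S" "S \<subseteq> X" using S by auto
    then show ?thesis using S U bS g_swap[OF bS] E.chainsD[OF c S]
      by (simp add: pmap_def imap_def)
  next
    case False
    have "b' \<notin> S" "S \<subseteq> X" using S by auto
    then show ?thesis using S False by (simp add: pmap_def imap_def)
  qed
qed

lemma fs_split: "abelian_group M \<Longrightarrow> finite A \<Longrightarrow> x \<in> A \<Longrightarrow> f \<in> A \<rightarrow> carrier M \<Longrightarrow>
   finsum M f A = f x \<oplus>\<^bsub>M\<^esub> finsum M f (A - {x})"
proof -
  assume M: "abelian_group M" and A: "finite A" "x \<in> A" "f \<in> A \<rightarrow> carrier M"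
  interpret M: abelian_group M by fact
  have "A = insert x (A - {x})" using A by auto
  then have "finsum M f A = finsum M f (insert x (A - {x}))" by simp
  also have "\<dots> = f x \<oplus>\<^bsub>M\<^esub> finsum M f (A - {x})"
    by (rule M.finsum_insert) (use A in auto)
  finally show ?thesis .
qed

lemma dterm_zero: "S \<subseteq> X \<Longrightarrow> x \<in> X \<Longrightarrow> x \<notin> S \<Longrightarrow> c (insert x S) = \<zero>\<^bsub>GG (insert x S)\<^esub> \<Longrightarrow>
   C.dterm c S x = \<zero>\<^bsub>GG S\<^esub>"
proof -
  assume S: "S \<subseteq> X" "x \<in> X" "x \<notin> S" and z: "c (insert x S) = \<zero>\<^bsub>GG (insert x S)\<^esub>"
  have "GGm (insert x S) S (c (insert x S)) = \<zero>\<^bsub>GG S\<^esub>"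
    unfolding z by (rule hm_zero) (use S gX in auto)
  then show ?thesis unfolding C.dterm_def using abelian_group.sg_zero[OF C.agG[OF S(1)]] by simp
qed

lemma imap_chain: "c \<in> bchains X' GG (Suc k) \<Longrightarrow>
   imap k (E.D (Suc k) c) = C.D (Suc k) (imap (Suc k) c)"
proof (rule ext)
  fix S assume c: "c \<in> bchains X' GG (Suc k)"
  show "imap k (E.D (Suc k) c) S = C.D (Suc k) (imap (Suc k) c) S"
  proof (cases "S \<subseteq> X \<and> card S = k")
    case True
    then have S: "S \<subseteq> X" "card S = k" by auto
    interpret M: abelian_group "GG S" using C.agG S(1) by blast
    have ic: "imap (Suc k) c \<in> bchains X GG (Suc k)" using imap_closed c by blast
    show ?thesis
    proof (cases "b' \<in> S")
      case True
      have "C.dterm (imap (Suc k) c) S x = \<zero>\<^bsub>GG S\<^esub>" if x: "x \<in> X - S" for x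
        by (rule dterm_zero) (use S x True C.ins_ix[OF S x] in \<open>auto simp: imap_def\<close>)
      then have "finsum (GG S) (C.dterm (imap (Suc k) c) S) (X - S) = finsum (GG S) (\<lambda>x. \<zero>\<^bsub>GG S\<^esub>) (X - S)"
        by (intro M.finsum_cong') auto
      then have "C.D (Suc k) (imap (Suc k) c) S = \<zero>\<^bsub>GG S\<^esub>"
        using S by (simp add: C.D_val M.finsum_zero)
      then show ?thesis using S True by (simp add: imap_def)
    next
      case False
      have SX': "S \<subseteq> X'" using S False by auto
      have "C.D (Suc k) (imap (Suc k) c) S = C.dterm (imap (Suc k) c) S b' \<oplus>\<^bsub>GG S\<^esub>
         finsum (GG S) (C.dterm (imap (Suc k) c) S) (X - S - {b'})"
        using S by (simp add: C.D_val) (rule fs_split, use C.agG C.finX b'X False C.dterm_Pi[OF ic S] in auto)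
      also have "C.dterm (imap (Suc k) c) S b' = \<zero>\<^bsub>GG S\<^esub>"
        by (rule dterm_zero) (use S b'X False C.ins_ix[OF S, of b'] in \<open>auto simp: imap_def\<close>)
      also have "finsum (GG S) (C.dterm (imap (Suc k) c) S) (X - S - {b'}) =
          finsum (GG S) (C.dterm c S) (X' - S)"
      proof (rule M.finsum_cong')
        show "X - S - {b'} = X' - S" by auto
        show "C.dterm c S \<in> X' - S \<rightarrow> carrier (GG S)" using E.dterm_Pi[OF c SX' S(2)] by simp
        fix x assume x: "x \<in> X' - S"
        have "imap (Suc k) c (insert x S) = c (insert x S)"
          using C.ins_ix[OF S, of x] x False by (auto simp: imap_def)
        then show "C.dterm (imap (Suc k) c) S x = C.dterm c S x" by (simp add: C.dterm_def)
      qed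
      finally show ?thesis using S SX' False E.D_val[OF SX' S(2)]
        M.l_zero E.dterm_Pi[OF c SX' S(2)] C.finX by (simp add: imap_def M.finsum_closed)
    qed
  next
    case False
    then show ?thesis by (auto simp: imap_def C.D_undef)
  qed
qed

lemma dterm_cnt: "C.dterm c S x = sg (GG S) (cnt idx S x) (GGm (insert x S) S (c (insert x S)))"
  by (simp add: C.dterm_def cnt_def)

lemma g_bb: "g ` insert b' A = g ` insert b A"
  by (simp add: image_insert gbb)

lemma idx_ne: "x \<in> X \<Longrightarrow> y \<in> X \<Longrightarrow> x \<noteq> y \<Longrightarrow> idx x \<noteq> idx y"
  using injX by (meson inj_on_def)

lemma par1: "T \<subseteq> X \<Longrightarrow> b \<notin> T \<Longrightarrow> b' \<notin> T \<Longrightarrow>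
   odd (cnt idx (insert b T) b' + (eps T + cnt idx (insert b' T) b))"
proof -
  assume T: "T \<subseteq> X" "b \<notin> T" "b' \<notin> T"
  have f: "finite T" using T finS by blast
  have ne: "idx b \<noteq> idx b'" using idx_ne bX b'X bb' by blast
  show ?thesis using T f ne unfolding eps_def
    by (simp add: cnt_ins) (cases "idx b < idx b'"; cases "idx b' < idx b"; auto)
qed

lemma par2: "T \<subseteq> X \<Longrightarrow> b \<notin> T \<Longrightarrow> b' \<notin> T \<Longrightarrow> x \<in> X \<Longrightarrow> x \<notin> T \<Longrightarrow> x \<noteq> b \<Longrightarrow> x \<noteq> b' \<Longrightarrow>
   even (cnt idx (insert b T) x + eps (insert x T)) = even (eps T + cnt idx (insert b' T) x)"
proof -
  assume T: "T \<subseteq> X" "b \<notin> T" "b' \<notin> T" "x \<in> X" "x \<notin> T" "x \<noteq> b" "x \<noteq> b'"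
  have f: "finite T" using T finS by blast
  have ne: "idx b \<noteq> idx x" "idx x \<noteq> idx b'" using idx_ne bX b'X T by metis+
  show ?thesis using T f ne unfolding eps_def
    by (simp add: cnt_ins) (cases "idx b < idx x"; cases "idx b' < idx x"; cases "idx x < idx b"; cases "idx x < idx b'"; auto)
qed

lemma pmap_chain: "c \<in> bchains X GG (Suc k) \<Longrightarrow>
   pmap k (C.D (Suc k) c) = E.D (Suc k) (pmap (Suc k) c)"
proof (rule ext)
  fix S assume c: "c \<in> bchains X GG (Suc k)"
  have pc: "pmap (Suc k) c \<in> bchains X' GG (Suc k)" using pmap_closed c by blast
  show "pmap k (C.D (Suc k) c) S = E.D (Suc k) (pmap (Suc k) c) S"
  proof (cases "S \<subseteq> X' \<and> card S = k")
    case False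
    then show ?thesis by (auto simp: pmap_def E.D_undef)
  next
    case True
    then have S: "S \<subseteq> X'" "card S = k" by auto
    have SX: "S \<subseteq> X" "b' \<notin> S" using S by auto
    have SY: "g ` S \<subseteq> Y" using gsub SX by blast
    interpret M: abelian_group "GG S" using C.agG SX(1) by blast
    have fin: "finite (X - S)" "finite (X' - S)" using C.finX by auto
    have dP: "C.dterm c S \<in> X - S \<rightarrow> carrier (GG S)" using C.dterm_Pi[OF c SX(1) S(2)] .
    have dPp: "C.dterm (pmap (Suc k) c) S \<in> X' - S \<rightarrow> carrier (GG S)" using E.dterm_Pi[OF pc S] .
    have cin: "\<And>A. A \<subseteq> X \<Longrightarrow> card A = Suc k \<Longrightarrow> c A \<in> carrier (GG A)" using C.chainsD[OF c] by blast
    have e1: "C.D (Suc k) c S = C.dterm c S b' \<oplus>\<^bsub>GG S\<^esub> finsum (GG S) (C.dterm c S) (X' - S)"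
    proof -
      have "C.D (Suc k) c S = finsum (GG S) (C.dterm c S) (X - S)" using C.D_val[OF SX(1) S(2)] .
      also have "\<dots> = C.dterm c S b' \<oplus>\<^bsub>GG S\<^esub> finsum (GG S) (C.dterm c S) (X - S - {b'})"
        by (rule fs_split) (use C.agG SX fin dP b'X in auto)
      also have "X - S - {b'} = X' - S" by auto
      finally show ?thesis .
    qed
    show ?thesis
    proof (cases "b \<in> S")
      case False
      have bX': "b \<in> X' - S" using bX bb' False by auto
      have e2: "finsum (GG S) (C.dterm c S) (X' - S) =
          C.dterm c S b \<oplus>\<^bsub>GG S\<^esub> finsum (GG S) (C.dterm c S) (X' - S - {b})"
        by (rule fs_split) (use C.agG SX fin dP bX' in auto)
      have e3: "E.D (Suc k) (pmap (Suc k) c) S = C.dterm (pmap (Suc k) c) S b \<oplus>\<^bsub>GG S\<^esub>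
          finsum (GG S) (C.dterm (pmap (Suc k) c) S) (X' - S - {b})"
        unfolding E.D_val[OF S] by (rule fs_split) (use C.agG SX fin dPp bX' in auto)
      have e4: "finsum (GG S) (C.dterm (pmap (Suc k) c) S) (X' - S - {b}) =
          finsum (GG S) (C.dterm c S) (X' - S - {b})"
      proof (rule M.finsum_cong')
        show "C.dterm c S \<in> X' - S - {b} \<rightarrow> carrier (GG S)" using dP by auto
        fix x assume x: "x \<in> X' - S - {b}"
        have "insert x S \<subseteq> X'" "card (insert x S) = Suc k" "b \<notin> insert x S"
          using x S False finS[OF SX(1)] by auto
        then have "pmap (Suc k) c (insert x S) = c (insert x S)" by (simp add: pmap_def)
        then show "C.dterm (pmap (Suc k) c) S x = C.dterm c S x" by (simp add: C.dterm_def)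
      qed simp
      have e5: "C.dterm (pmap (Suc k) c) S b = C.dterm c S b \<oplus>\<^bsub>GG S\<^esub> C.dterm c S b'"
      proof -
        have i1: "insert b S \<subseteq> X" "card (insert b S) = Suc k" "insert b' S \<subseteq> X" "card (insert b' S) = Suc k"
          using C.ins_ix[OF SX(1) S(2)] bX b'X False SX by auto
        have i2: "insert b S \<subseteq> X'" using i1 SX bb' by auto
        have v1: "c (insert b S) \<in> carrier (GG (insert b S))" using cin i1 by blast
        have v2: "c (insert b' S) \<in> carrier (GG (insert b S))" using cin[of "insert b' S"] i1 g_bb[of S] by simp
        have rm: "insert b S - {b} = S" using False by auto
        have "pmap (Suc k) c (insert b S) = c (insert b S) \<oplus>\<^bsub>GG (insert b S)\<^esub>
             sg (GG (insert b S)) (eps S) (c (insert b' S))"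
          using i1 i2 rm by (simp add: pmap_def)
        then have "C.dterm (pmap (Suc k) c) S b = sg (GG S) (cnt idx S b) (GGm (insert b S) S (c (insert b S)))
            \<oplus>\<^bsub>GG S\<^esub> sg (GG S) (cnt idx S b + eps S) (GGm (insert b S) S (c (insert b' S)))"
          unfolding dterm_cnt using lin2[OF image_mono[OF subset_insertI] gsub[OF i1(1)] v1 v2] by simp
        also have "sg (GG S) (cnt idx S b + eps S) (GGm (insert b S) S (c (insert b' S)))
            = C.dterm c S b'"
          unfolding dterm_cnt g_bb[of S, symmetric] by (rule M.sg_par) (auto simp add: eps_def)
        finally show ?thesis by (simp add: dterm_cnt)
      qed
      have c1: "C.dterm c S b \<in> carrier (GG S)" "C.dterm c S b' \<in> carrier (GG S)"
        "finsum (GG S) (C.dterm c S) (X' - S - {b}) \<in> carrier (GG S)"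
        using dP bX' SX b'X by (auto intro!: M.finsum_closed)
      have "pmap k (C.D (Suc k) c) S = C.D (Suc k) c S" using S False by (simp add: pmap_def)
      also have "\<dots> = E.D (Suc k) (pmap (Suc k) c) S"
        unfolding e1 e2 e3 e4 e5 using c1 by (simp add: M.a_ac)
      finally show ?thesis .
    next
      case bS: True
      define T where "T = S - {b}"
      define U where "U = insert b' T"
      have T: "T \<subseteq> X" "b \<notin> T" "b' \<notin> T" "S = insert b T" using SX bS unfolding T_def by auto
      have U: "U \<subseteq> X" "card U = k" "b \<notin> U" "b' \<in> U" "U = insert b' (S - {b})"
        using T b'X bb' card_swap[OF S(1) bS] S unfolding U_def T_def by auto
      have gU: "g ` U = g ` S" using g_swap[OF bS] U by simp
      have GU: "GG U = GG S" using gU by simp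
      have dPU: "C.dterm c U \<in> X - U \<rightarrow> carrier (GG S)" using C.dterm_Pi[OF c U(1) U(2)] GU by simp
      have XU: "X - U - {b} = X' - S" using T unfolding U_def by auto
      have e2: "C.D (Suc k) c U = C.dterm c U b \<oplus>\<^bsub>GG S\<^esub> finsum (GG S) (C.dterm c U) (X' - S)"
      proof -
        have "C.D (Suc k) c U = finsum (GG S) (C.dterm c U) (X - U)" using C.D_val[OF U(1) U(2)] GU by simp
        also have "\<dots> = C.dterm c U b \<oplus>\<^bsub>GG S\<^esub> finsum (GG S) (C.dterm c U) (X - U - {b})"
          by (rule fs_split) (use C.agG SX C.finX dPU bX U in auto)
        finally show ?thesis unfolding XU .
      qed
      have e4: "C.dterm (pmap (Suc k) c) S x = C.dterm c S x \<oplus>\<^bsub>GG S\<^esub> sg (GG S) (eps T) (C.dterm c U x)"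
        if x: "x \<in> X' - S" for x
      proof -
        define A where "A = insert x S"
        have A: "A \<subseteq> X'" "card A = Suc k" "b \<in> A" "A \<subseteq> X" using x S bS finS[OF SX(1)] unfolding A_def by auto
        have AT: "A - {b} = insert x T" using x T unfolding A_def by auto
        have AU: "insert b' (insert x T) = insert x U" unfolding U_def by auto
        have gA: "g ` insert x U = g ` A" using gU unfolding A_def by (simp add: image_insert)
        have xU: "x \<in> X" "x \<notin> U" using x unfolding U_def T_def by auto
        have iU: "insert x U \<subseteq> X" "card (insert x U) = Suc k" using C.ins_ix[OF U(1) U(2), of x] xU by auto
        have AS: "S \<subseteq> A" unfolding A_def by blast
        have v1: "c A \<in> carrier (GG A)" using cin A by blast
        have v2: "c (insert x U) \<in> carrier (GG A)" using cin[OF iU] gA by simp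
        have "pmap (Suc k) c A = c A \<oplus>\<^bsub>GG A\<^esub> sg (GG A) (eps (insert x T)) (c (insert x U))"
          using A AT AU by (simp add: pmap_def)
        then have "C.dterm (pmap (Suc k) c) S x = sg (GG S) (cnt idx S x) (GGm A S (c A))
            \<oplus>\<^bsub>GG S\<^esub> sg (GG S) (cnt idx S x + eps (insert x T)) (GGm A S (c (insert x U)))"
          unfolding dterm_cnt A_def[symmetric]
          using lin2[OF image_mono[OF AS] gsub[OF A(4)] v1 v2] by (simp add: A_def)
        also have "sg (GG S) (cnt idx S x + eps (insert x T)) (GGm A S (c (insert x U)))
            = sg (GG S) (eps T) (C.dterm c U x)"
        proof -
          have "C.dterm c U x = sg (GG S) (cnt idx U x) (GGm A S (c (insert x U)))"
            unfolding dterm_cnt using gA gU by simp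
          moreover have "GGm A S (c (insert x U)) \<in> carrier (GG S)"
            using hm_closed[OF image_mono[OF AS] gsub[OF A(4)] v2] by (simp add: A_def)
          moreover have "even (cnt idx S x + eps (insert x T)) = even (eps T + cnt idx U x)"
            using par2[OF T(1-3) xU(1)] x T(4) U_def by auto
          ultimately show ?thesis
            by (simp add: M.sg_sg) (rule M.sg_par, auto)
        qed
        finally show ?thesis by (simp add: dterm_cnt A_def)
      qed
      have e3: "E.D (Suc k) (pmap (Suc k) c) S = finsum (GG S) (C.dterm c S) (X' - S) \<oplus>\<^bsub>GG S\<^esub>
          sg (GG S) (eps T) (finsum (GG S) (C.dterm c U) (X' - S))"
      proof -
        have dU': "C.dterm c U \<in> X' - S \<rightarrow> carrier (GG S)" using dPU XU by auto
        have dS': "C.dterm c S \<in> X' - S \<rightarrow> carrier (GG S)" using dP by auto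
        have "E.D (Suc k) (pmap (Suc k) c) S = finsum (GG S) (\<lambda>x. C.dterm c S x \<oplus>\<^bsub>GG S\<^esub> sg (GG S) (eps T) (C.dterm c U x)) (X' - S)"
          unfolding E.D_val[OF S]
        proof (rule M.finsum_cong')
          show "(\<lambda>x. C.dterm c S x \<oplus>\<^bsub>GG S\<^esub> sg (GG S) (eps T) (C.dterm c U x)) \<in> X' - S \<rightarrow> carrier (GG S)"
            using dU' dS' by (auto intro!: M.a_closed M.sg_closed)
        qed (use e4 in auto)
        also have "\<dots> = finsum (GG S) (C.dterm c S) (X' - S) \<oplus>\<^bsub>GG S\<^esub> finsum (GG S) (\<lambda>x. sg (GG S) (eps T) (C.dterm c U x)) (X' - S)"
          by (rule M.finsum_addf) (use dS' in blast, intro Pi_I M.sg_closed funcset_mem[OF dU'])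
        also have "finsum (GG S) (\<lambda>x. sg (GG S) (eps T) (C.dterm c U x)) (X' - S) =
            sg (GG S) (eps T) (finsum (GG S) (C.dterm c U) (X' - S))"
          by (rule M.sg_finsum[symmetric]) (use dU' fin in auto)
        finally show ?thesis .
      qed
      have e6: "C.dterm c S b' \<oplus>\<^bsub>GG S\<^esub> sg (GG S) (eps T) (C.dterm c U b) = \<zero>\<^bsub>GG S\<^esub>"
      proof -
        have i1: "insert b' S \<subseteq> X" "card (insert b' S) = Suc k" using C.ins_ix[OF SX(1) S(2)] b'X SX by auto
        have bU: "insert b U = insert b' S" using T unfolding U_def by auto
        have v: "c (insert b' S) \<in> carrier (GG S)" using cin[OF i1] g_ins_b'[OF bS] by simp
        have d1: "C.dterm c S b' = sg (GG S) (cnt idx S b') (c (insert b' S))"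
          unfolding dterm_cnt g_ins_b'[OF bS] using hm_id[OF SY] v by simp
        have d2: "C.dterm c U b = sg (GG S) (cnt idx U b) (c (insert b' S))"
          unfolding dterm_cnt bU using g_ins_b'[OF bS] gU hm_id[OF SY] v by simp
        have "odd (cnt idx S b' + (eps T + cnt idx U b))" using par1[OF T(1-3)] T(4) U_def by simp
        then show ?thesis unfolding d1 d2 using v
          by (simp add: M.sg_sg) (rule M.sg_cancel, auto)
      qed
      have c1: "C.dterm c S b' \<in> carrier (GG S)" "C.dterm c U b \<in> carrier (GG S)"
        "finsum (GG S) (C.dterm c S) (X' - S) \<in> carrier (GG S)"
        "finsum (GG S) (C.dterm c U) (X' - S) \<in> carrier (GG S)"
        using dP dPU SX b'X bX U XU by (auto intro!: M.finsum_closed)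
      have "pmap k (C.D (Suc k) c) S = C.D (Suc k) c S \<oplus>\<^bsub>GG S\<^esub> sg (GG S) (eps T) (C.D (Suc k) c U)"
        using S bS GU unfolding T_def U_def by (simp add: pmap_def)
      also have "\<dots> = (C.dterm c S b' \<oplus>\<^bsub>GG S\<^esub> sg (GG S) (eps T) (C.dterm c U b)) \<oplus>\<^bsub>GG S\<^esub>
          (finsum (GG S) (C.dterm c S) (X' - S) \<oplus>\<^bsub>GG S\<^esub>
          sg (GG S) (eps T) (finsum (GG S) (C.dterm c U) (X' - S)))"
        unfolding e1 e2 using c1 by (simp add: M.sg_add M.a_ac)
      also have "\<dots> = E.D (Suc k) (pmap (Suc k) c) S"
        unfolding e6 e3 using c1 by simp
      finally show ?thesis .
    qed
  qed
qed

lemma par3: "V \<subseteq> X \<Longrightarrow> b \<notin> V \<Longrightarrow> x \<in> X \<Longrightarrow> x \<notin> V \<Longrightarrow> x \<noteq> b \<Longrightarrow>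
   even (cnt idx (insert b V) x + cnt idx (insert x V) b) = even (Suc (cnt idx V b + cnt idx V x))"
proof -
  assume T: "V \<subseteq> X" "b \<notin> V" "x \<in> X" "x \<notin> V" "x \<noteq> b"
  have f: "finite V" using T finS by blast
  have ne: "idx b \<noteq> idx x" using idx_ne bX T by metis
  show ?thesis using T f ne
    by (simp add: cnt_ins) (cases "idx b < idx x"; cases "idx x < idx b"; auto)
qed

lemma hmap_closed: "c \<in> bchains X GG k \<Longrightarrow> hmap k c \<in> bchains X GG (Suc k)"
proof (rule C.chainsI)
  fix S assume c: "c \<in> bchains X GG k" and S: "S \<subseteq> X" "card S = Suc k"
  interpret M: abelian_group "GG S" using C.agG S(1) by blast
  show "hmap k c S \<in> carrier (GG S)"
  proof (cases "b \<in> S \<and> b' \<in> S")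
    case True
    have "S - {b} \<subseteq> X" "card (S - {b}) = k" using S True finS[OF S(1)] by auto
    then have "c (S - {b}) \<in> carrier (GG (S - {b}))" using C.chainsD[OF c] by blast
    then have "c (S - {b}) \<in> carrier (GG S)" using g_rem_b True by simp
    then show ?thesis using S True by (simp add: hmap_def)
  next
    case False then show ?thesis using S by (auto simp add: hmap_def)
  qed
next
  fix S assume "\<not> (S \<subseteq> X \<and> card S = Suc k)" then show "hmap k c S = undefined" by (auto simp add: hmap_def)
qed

lemma decomp: "c \<in> bcycles X idx GG GGm k \<Longrightarrow>
   c = badd X GG k (imap k (pmap k c)) (C.D (Suc k) (hmap k c))"
proof -
  assume cz: "c \<in> bcycles X idx GG GGm k"
  have c: "c \<in> bchains X GG k" using cz C.Z_sub by blast
  have hc: "hmap k c \<in> bchains X GG (Suc k)" using hmap_closed c by blast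
  have ipc: "imap k (pmap k c) \<in> bchains X GG k" using imap_closed pmap_closed c by blast
  show ?thesis
  proof (rule C.chains_eqI[OF c])
    show "badd X GG k (imap k (pmap k c)) (C.D (Suc k) (hmap k c)) \<in> bchains X GG k"
      using C.badd_closed ipc C.D_closed[OF hc] by blast
    fix S assume S: "S \<subseteq> X" "card S = k"
    interpret M: abelian_group "GG S" using C.agG S(1) by blast
    have SY: "g ` S \<subseteq> Y" using gsub S by blast
    have fin: "finite (X - S)" using C.finX by auto
    have dP: "C.dterm (hmap k c) S \<in> X - S \<rightarrow> carrier (GG S)" using C.dterm_Pi[OF hc S] .
    have cS: "c S \<in> carrier (GG S)" using C.chainsD[OF c S] .
    have Dv: "C.D (Suc k) (hmap k c) S = finsum (GG S) (C.dterm (hmap k c) S) (X - S)"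
      using C.D_val[OF S] .
    have zt: "C.dterm (hmap k c) S x = \<zero>\<^bsub>GG S\<^esub>" if x: "x \<in> X - S" "\<not> (b \<in> insert x S \<and> b' \<in> insert x S)" for x
      by (rule dterm_zero) (use S x C.ins_ix[OF S, of x] in \<open>auto simp: hmap_def\<close>)
    have val: "badd X GG k (imap k (pmap k c)) (C.D (Suc k) (hmap k c)) S =
        imap k (pmap k c) S \<oplus>\<^bsub>GG S\<^esub> finsum (GG S) (C.dterm (hmap k c) S) (X - S)"
      using S Dv by (simp add: badd_def)
    show "c S = badd X GG k (imap k (pmap k c)) (C.D (Suc k) (hmap k c)) S"
      unfolding val
    proof (cases "b \<in> S"; cases "b' \<in> S")
      assume nb: "b \<notin> S" and nb': "b' \<notin> S"
      have "finsum (GG S) (C.dterm (hmap k c) S) (X - S) = finsum (GG S) (\<lambda>x. \<zero>\<^bsub>GG S\<^esub>) (X - S)"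
        by (rule M.finsum_cong') (use zt nb nb' bb' in auto)
      moreover have "S \<subseteq> X'" using S nb' by auto
      then have "imap k (pmap k c) S = c S" using S nb nb' by (simp add: imap_def pmap_def)
      ultimately show "c S = imap k (pmap k c) S \<oplus>\<^bsub>GG S\<^esub> finsum (GG S) (C.dterm (hmap k c) S) (X - S)"
        using cS by simp
    next
      assume bS: "b \<in> S" and nb': "b' \<notin> S"
      define T where "T = S - {b}"
      define U where "U = insert b' T"
      have T: "T \<subseteq> X" "b \<notin> T" "b' \<notin> T" "S = insert b T" using S bS nb' unfolding T_def by auto
      have SX': "S \<subseteq> X'" using S nb' by auto
      have b'XS: "b' \<in> X - S" using b'X nb' by auto
      have e1: "finsum (GG S) (C.dterm (hmap k c) S) (X - S) = C.dterm (hmap k c) S b' \<oplus>\<^bsub>GG S\<^esub>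
          finsum (GG S) (C.dterm (hmap k c) S) (X - S - {b'})"
        by (rule fs_split) (use C.agG S fin dP b'XS in auto)
      have e2: "finsum (GG S) (C.dterm (hmap k c) S) (X - S - {b'}) = \<zero>\<^bsub>GG S\<^esub>"
      proof -
        have "finsum (GG S) (C.dterm (hmap k c) S) (X - S - {b'}) = finsum (GG S) (\<lambda>x. \<zero>\<^bsub>GG S\<^esub>) (X - S - {b'})"
          by (rule M.finsum_cong') (use zt nb' in auto)
        then show ?thesis by simp
      qed
      have i1: "insert b' S \<subseteq> X" "card (insert b' S) = Suc k" using C.ins_ix[OF S b'XS] by auto
      have rm: "insert b' S - {b} = U" using bb' unfolding U_def T_def by auto
      have vU: "c U \<in> carrier (GG S)" using swap_in[OF c SX' S(2) bS] unfolding U_def T_def .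
      have e3: "C.dterm (hmap k c) S b' = sg (GG S) (cnt idx S b' + cnt idx U b) (c U)"
      proof -
        have "hmap k c (insert b' S) = sg (GG (insert b' S)) (cnt idx U b) (c U)"
          using i1 bS rm by (simp add: hmap_def)
        then show ?thesis unfolding dterm_cnt g_ins_b'[OF bS]
          using hm_id[OF SY] vU by (simp add: M.sg_sg)
      qed
      have e4: "imap k (pmap k c) S = c S \<oplus>\<^bsub>GG S\<^esub> sg (GG S) (eps T) (c U)"
        using S SX' nb' bS unfolding U_def T_def by (simp add: imap_def pmap_def)
      have od: "odd (eps T + (cnt idx S b' + cnt idx U b))"
        using par1[OF T(1-3)] T(4) unfolding U_def by (simp add: ac_simps)
      show "c S = imap k (pmap k c) S \<oplus>\<^bsub>GG S\<^esub> finsum (GG S) (C.dterm (hmap k c) S) (X - S)"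
        unfolding e1 e2 e3 e4 using cS vU M.sg_cancel[OF vU od] by (simp add: M.a_assoc)
    next
      assume nb: "b \<notin> S" and b'S: "b' \<in> S"
      have bXS: "b \<in> X - S" using bX nb by auto
      have e1: "finsum (GG S) (C.dterm (hmap k c) S) (X - S) = C.dterm (hmap k c) S b \<oplus>\<^bsub>GG S\<^esub>
          finsum (GG S) (C.dterm (hmap k c) S) (X - S - {b})"
        by (rule fs_split) (use C.agG S fin dP bXS in auto)
      have e2: "finsum (GG S) (C.dterm (hmap k c) S) (X - S - {b}) = \<zero>\<^bsub>GG S\<^esub>"
      proof -
        have "finsum (GG S) (C.dterm (hmap k c) S) (X - S - {b}) = finsum (GG S) (\<lambda>x. \<zero>\<^bsub>GG S\<^esub>) (X - S - {b})"
          by (rule M.finsum_cong') (use zt nb in auto)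
        then show ?thesis by simp
      qed
      have i1: "insert b S \<subseteq> X" "card (insert b S) = Suc k" using C.ins_ix[OF S bXS] by auto
      have rm: "insert b S - {b} = S" using nb by auto
      have e3: "C.dterm (hmap k c) S b = c S"
      proof -
        have "hmap k c (insert b S) = sg (GG (insert b S)) (cnt idx S b) (c S)"
          using i1 b'S rm by (simp add: hmap_def)
        then show ?thesis unfolding dterm_cnt g_ins_b[OF b'S]
          using hm_id[OF SY] cS by (simp add: M.sg_sg sg_def)
      qed
      have e4: "imap k (pmap k c) S = \<zero>\<^bsub>GG S\<^esub>" using S b'S by (simp add: imap_def)
      show "c S = imap k (pmap k c) S \<oplus>\<^bsub>GG S\<^esub> finsum (GG S) (C.dterm (hmap k c) S) (X - S)"
        unfolding e1 e2 e3 e4 using cS by simp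
    next
      assume bS: "b \<in> S" and b'S: "b' \<in> S"
      define V where "V = S - {b}"
      have V: "V \<subseteq> X" "b \<notin> V" "S = insert b V" "b' \<in> V" using S bS b'S bb' unfolding V_def by auto
      have finS': "finite S" using finS S by blast
      have cardS: "card S = Suc (card V)" using V finS' by (metis card_insert_disjoint finite_insert)
      then obtain k0 where k0: "k = Suc k0" "card V = k0" using S by auto
      have gV: "g ` V = g ` S" using g_rem_b[OF b'S] unfolding V_def .
      have GV: "GG V = GG S" using gV by simp
      have cyc: "C.D (Suc k0) c = bzero X GG k0" using cz k0 by (simp add: bcycles_def)
      have dPV: "C.dterm c V \<in> X - V \<rightarrow> carrier (GG S)" using C.dterm_Pi[OF _ V(1) k0(2)] c k0 GV by simp
      have XV: "X - V - {b} = X - S" using V by auto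
      have dPS: "C.dterm c V \<in> X - S \<rightarrow> carrier (GG S)"
      proof
        fix x assume "x \<in> X - S" then have "x \<in> X - V" using V by auto
        then show "C.dterm c V x \<in> carrier (GG S)" using dPV by blast
      qed
      have bXV: "b \<in> X - V" using bX V by auto
      have e1: "\<zero>\<^bsub>GG S\<^esub> = C.dterm c V b \<oplus>\<^bsub>GG S\<^esub> finsum (GG S) (C.dterm c V) (X - S)"
      proof -
        have "\<zero>\<^bsub>GG S\<^esub> = C.D (Suc k0) c V" using cyc V(1) k0(2) GV by (simp add: bzero_def)
        also have "\<dots> = finsum (GG S) (C.dterm c V) (X - V)" using C.D_val[OF V(1) k0(2)] GV by simp
        also have "\<dots> = C.dterm c V b \<oplus>\<^bsub>GG S\<^esub> finsum (GG S) (C.dterm c V) (X - V - {b})"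
          by (rule fs_split) (use C.agG S C.finX dPV bXV in auto)
        finally show ?thesis unfolding XV .
      qed
      have e2: "C.dterm c V b = sg (GG S) (cnt idx V b) (c S)"
        unfolding dterm_cnt V(3)[symmetric] using gV hm_id[OF SY] cS by simp
      have fc: "finsum (GG S) (C.dterm c V) (X - S) \<in> carrier (GG S)"
        using dPS by (intro M.finsum_closed)
      have e3: "c S = sg (GG S) (Suc (cnt idx V b)) (finsum (GG S) (C.dterm c V) (X - S))"
      proof -
        have "\<ominus>\<^bsub>GG S\<^esub> finsum (GG S) (C.dterm c V) (X - S) = sg (GG S) (cnt idx V b) (c S)"
          by (rule M.minus_equality) (use e1 e2 fc cS in simp_all)
        then have "sg (GG S) (cnt idx V b) (\<ominus>\<^bsub>GG S\<^esub> finsum (GG S) (C.dterm c V) (X - S)) = c S"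
          using cS by (simp add: M.sg_sg sg_def)
        then show ?thesis using fc by (auto simp add: sg_def M.minus_minus split: if_splits)
      qed
      have e4: "C.dterm (hmap k c) S x = sg (GG S) (Suc (cnt idx V b)) (C.dterm c V x)" if x: "x \<in> X - S" for x
      proof -
        define A where "A = insert x S"
        have A: "A \<subseteq> X" "card A = Suc k" using C.ins_ix[OF S x] unfolding A_def by auto
        have AV: "A - {b} = insert x V" using x V unfolding A_def by auto
        have xV: "x \<in> X" "x \<notin> V" "x \<noteq> b" using x V by auto
        have iV: "insert x V \<subseteq> X" "card (insert x V) = Suc k0" using C.ins_ix[OF V(1) k0(2), of x] xV by auto
        have gA: "g ` insert x V = g ` A" using gV unfolding A_def by (simp add: image_insert)
        have AS: "S \<subseteq> A" unfolding A_def by blast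
        have "c (insert x V) \<in> carrier (GG (insert x V))"
          by (rule C.chainsD[OF c iV(1)]) (use iV(2) k0 in simp)
        then have v: "c (insert x V) \<in> carrier (GG A)" using gA by simp
        have "hmap k c A = sg (GG A) (cnt idx (insert x V) b) (c (insert x V))"
          using A AV bS b'S unfolding A_def by (simp add: hmap_def)
        then have "C.dterm (hmap k c) S x = sg (GG S) (cnt idx S x + cnt idx (insert x V) b) (GGm A S (c (insert x V)))"
          unfolding dterm_cnt A_def[symmetric]
          using hm_sg[OF image_mono[OF AS] gsub[OF A(1)] v] hm_closed[OF image_mono[OF AS] gsub[OF A(1)] v]
          by (simp add: M.sg_sg)
        also have "\<dots> = sg (GG S) (Suc (cnt idx V b) + cnt idx V x) (GGm A S (c (insert x V)))"
          by (rule M.sg_par) (use par3[OF V(1,2) xV] V(3) in simp)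
        also have "\<dots> = sg (GG S) (Suc (cnt idx V b)) (C.dterm c V x)"
          unfolding dterm_cnt using gA gV hm_closed[OF image_mono[OF AS] gsub[OF A(1)] v]
          by (simp add: M.sg_sg)
        finally show ?thesis .
      qed
      have e5: "finsum (GG S) (C.dterm (hmap k c) S) (X - S) = c S"
      proof -
        have "finsum (GG S) (C.dterm (hmap k c) S) (X - S) =
            finsum (GG S) (\<lambda>x. sg (GG S) (Suc (cnt idx V b)) (C.dterm c V x)) (X - S)"
        proof (rule M.finsum_cong')
          show "(\<lambda>x. sg (GG S) (Suc (cnt idx V b)) (C.dterm c V x)) \<in> X - S \<rightarrow> carrier (GG S)"
            using dPS by (intro Pi_I M.sg_closed) blast
        qed (use e4 in auto)
        also have "\<dots> = sg (GG S) (Suc (cnt idx V b)) (finsum (GG S) (C.dterm c V) (X - S))"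
          by (rule M.sg_finsum[symmetric]) (use dPS fin in auto)
        finally show ?thesis using e3 by simp
      qed
      have e6: "imap k (pmap k c) S = \<zero>\<^bsub>GG S\<^esub>" using S b'S by (simp add: imap_def)
      show "c S = imap k (pmap k c) S \<oplus>\<^bsub>GG S\<^esub> finsum (GG S) (C.dterm (hmap k c) S) (X - S)"
        unfolding e5 e6 using cS by simp
    qed
  qed
qed

lemma pmap_zero: "pmap k (bzero X GG k) = bzero X' GG k"
proof -
  have "addmap (C.CG k) (E.CG k) (pmap k)"
    unfolding addmap_def using pmap_closed pmap_add by simp
  from addmap_zero[OF C.CG_ag E.CG_ag this] show ?thesis by simp
qed

lemma imap_zero: "imap k (bzero X' GG k) = bzero X GG k"
  by (rule ext) (auto simp: imap_def bzero_def)

lemma step_iso: "mod_isomorphic R (HC X idx GG GGm k) (HC X' idx GG GGm k)"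
proof (rule hc_iso[OF C.bcx_axioms E.bcx_axioms, where f = "pmap k"])
  show "\<And>c. c \<in> bchains X GG k \<Longrightarrow> pmap k c \<in> bchains X' GG k" by (rule pmap_closed)
  show "\<And>c c'. c \<in> bchains X GG k \<Longrightarrow> c' \<in> bchains X GG k \<Longrightarrow>
      pmap k (badd X GG k c c') = badd X' GG k (pmap k c) (pmap k c')" by (rule pmap_add)
  show "\<And>r c. r \<in> carrier R \<Longrightarrow> c \<in> bchains X GG k \<Longrightarrow>
      pmap k (bsmult X GG k r c) = bsmult X' GG k r (pmap k c)" by (rule pmap_smult)
next
  fix c assume "c \<in> bbounds X idx GG GGm k"
  then obtain y where y: "y \<in> bchains X GG (Suc k)" "c = C.D (Suc k) y" by (auto simp: bbounds_def)
  then have "pmap k c = E.D (Suc k) (pmap (Suc k) y)" using pmap_chain by simp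
  then show "pmap k c \<in> bbounds X' idx GG GGm k" using pmap_closed[OF y(1)] by (auto simp: bbounds_def)
next
  fix c assume cz: "c \<in> bcycles X idx GG GGm k"
  have c: "c \<in> bchains X GG k" using cz C.Z_sub by blast
  show "pmap k c \<in> bcycles X' idx GG GGm k"
  proof (cases k)
    case 0 then show ?thesis using pmap_closed[OF c] by (simp add: bcycles_def)
  next
    case (Suc k0)
    have "C.D (Suc k0) c = bzero X GG k0" using cz Suc by (simp add: bcycles_def)
    then have "E.D (Suc k0) (pmap (Suc k0) c) = bzero X' GG k0"
      using pmap_chain[of c k0] c Suc pmap_zero by simp
    then show ?thesis using pmap_closed[OF c] Suc by (simp add: bcycles_def)
  qed
next
  fix c assume cz: "c \<in> bcycles X idx GG GGm k" and pb: "pmap k c \<in> bbounds X' idx GG GGm k"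
  have c: "c \<in> bchains X GG k" using cz C.Z_sub by blast
  obtain y where y: "y \<in> bchains X' GG (Suc k)" "pmap k c = E.D (Suc k) y" using pb by (auto simp: bbounds_def)
  have hc: "hmap k c \<in> bchains X GG (Suc k)" using hmap_closed c by blast
  have iy: "imap (Suc k) y \<in> bchains X GG (Suc k)" using imap_closed y by blast
  have "c = badd X GG k (imap k (pmap k c)) (C.D (Suc k) (hmap k c))" using decomp cz by blast
  also have "\<dots> = badd X GG k (C.D (Suc k) (imap (Suc k) y)) (C.D (Suc k) (hmap k c))"
    using y imap_chain by simp
  also have "\<dots> = C.D (Suc k) (badd X GG (Suc k) (imap (Suc k) y) (hmap k c))"
    using C.D_add[OF iy hc] by simp
  finally show "c \<in> bbounds X idx GG GGm k"
    using C.badd_closed[OF iy hc] unfolding bbounds_def by blast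
next
  fix c' assume cz: "c' \<in> bcycles X' idx GG GGm k"
  have c': "c' \<in> bchains X' GG k" using cz E.Z_sub by blast
  have "imap k c' \<in> bcycles X idx GG GGm k"
  proof (cases k)
    case 0 then show ?thesis using imap_closed[OF c'] by (simp add: bcycles_def)
  next
    case (Suc k0)
    have "E.D (Suc k0) c' = bzero X' GG k0" using cz Suc by (simp add: bcycles_def)
    then have "C.D (Suc k0) (imap (Suc k0) c') = bzero X GG k0"
      using imap_chain[of c' k0] c' Suc imap_zero by simp
    then show ?thesis using imap_closed[OF c'] Suc by (simp add: bcycles_def)
  qed
  moreover have "pmap k (imap k c') = c'" using pmap_imap c' by blast
  ultimately show "\<exists>c\<in>bcycles X idx GG GGm k. bcoset X' idx GG GGm k c' = bcoset X' idx GG GGm k (pmap k c)"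
    by metis
qed

end

definition invc :: "('b \<Rightarrow> nat) \<Rightarrow> ('b \<Rightarrow> nat) \<Rightarrow> 'b set \<Rightarrow> nat" where
  "invc idx j S = card {(z,w). z \<in> S \<and> w \<in> S \<and> idx z < idx w \<and> j w < j z}"

lemma invc_ins: "finite S \<Longrightarrow> x \<notin> S \<Longrightarrow>
  invc idx j (insert x S) = invc idx j S + card {w \<in> S. idx x < idx w \<and> j w < j x}
     + card {z \<in> S. idx z < idx x \<and> j x < j z}"
proof -
  assume S: "finite S" "x \<notin> S"
  let ?P = "{(z,w). z \<in> S \<and> w \<in> S \<and> idx z < idx w \<and> j w < j z}"
  let ?A = "{w \<in> S. idx x < idx w \<and> j w < j x}"
  let ?B = "{z \<in> S. idx z < idx x \<and> j x < j z}"
  have e: "{(z,w). z \<in> insert x S \<and> w \<in> insert x S \<and> idx z < idx w \<and> j w < j z}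
      = ?P \<union> Pair x ` ?A \<union> (\<lambda>z. (z, x)) ` ?B" by auto
  have fP: "finite ?P" by (rule finite_subset[of _ "S \<times> S"]) (use S in auto)
  have c1: "card (Pair x ` ?A) = card ?A" by (rule card_image) (auto simp: inj_on_def)
  have c2: "card ((\<lambda>z. (z, x)) ` ?B) = card ?B" by (rule card_image) (auto simp: inj_on_def)
  have "card (?P \<union> Pair x ` ?A \<union> (\<lambda>z. (z, x)) ` ?B) = card (?P \<union> Pair x ` ?A) + card ((\<lambda>z. (z, x)) ` ?B)"
    by (rule card_Un_disjoint) (use S fP in auto)
  also have "card (?P \<union> Pair x ` ?A) = card ?P + card (Pair x ` ?A)"
    by (rule card_Un_disjoint) (use S fP in auto)
  finally show ?thesis unfolding invc_def e c1 c2 by simp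
qed

lemma par_aux: "(p::nat) = a + b \<Longrightarrow> q = a + d \<Longrightarrow> r = i + b + d \<Longrightarrow> even (p + r) = even (i + q)"
  by presburger

lemma par4:
  assumes S: "finite S" "x \<notin> S"
    and ii: "\<And>z. z \<in> S \<Longrightarrow> idx z \<noteq> idx x" and ij: "\<And>z. z \<in> S \<Longrightarrow> j z \<noteq> j x"
  shows "even (card {z \<in> S. j z < j x} + invc idx j (insert x S)) = even (invc idx j S + card {z \<in> S. idx z < idx x})"
proof -
  let ?A = "{z \<in> S. idx z < idx x}"
  let ?A' = "{z \<in> S. j z < j x}"
  have fA: "finite ?A" "finite ?A'" using S by auto
  have ii': "\<And>z. z \<in> S \<Longrightarrow> idx x \<noteq> idx z" using ii by metis
  have ij': "\<And>z. z \<in> S \<Longrightarrow> j x \<noteq> j z" using ij by metis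
  have d1: "?A' - ?A = {w \<in> S. idx x < idx w \<and> j w < j x}" using ii ii' by (auto simp: not_less order.order_iff_strict)
  have d2: "?A - ?A' = {z \<in> S. idx z < idx x \<and> j x < j z}" using ij ij' by (auto simp: not_less order.order_iff_strict)
  have i: "?A' \<inter> ?A = ?A \<inter> ?A'" by auto
  have "card ?A' = card (?A' \<inter> ?A) + card (?A' - ?A)" using card_Int_Diff fA by blast
  moreover have "card ?A = card (?A \<inter> ?A') + card (?A - ?A')" using card_Int_Diff fA by blast
  moreover note invc_ins[OF S, of idx j]
  ultimately show ?thesis unfolding d1 d2 i by (rule par_aux)
qed

lemma (in ysh) ysh_bcx: "finite Y \<Longrightarrow> inj_on idx' Y \<Longrightarrow> bcx R Y idx' H Hm"
  unfolding bcx_def by (intro conjI allI impI) (auto intro!: modH hm_closed hm_add hm_smult)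

locale rlb = ysh R Y H Hm for R :: "'r ring" and Y :: "'c set" and H :: "'c set \<Rightarrow> ('r,'m) module"
    and Hm :: "'c set \<Rightarrow> 'c set \<Rightarrow> 'm \<Rightarrow> 'm" +
  fixes X :: "'b set" and idx :: "'b \<Rightarrow> nat" and g :: "'b \<Rightarrow> 'c" and idx' :: "'c \<Rightarrow> nat"
  assumes finX: "finite X" and injX: "inj_on idx X" and bij: "bij_betw g X Y" and injY: "inj_on idx' Y"
begin

abbreviation "GG S \<equiv> H (g ` S)"
abbreviation "GGm T S \<equiv> Hm (g ` T) (g ` S)"
abbreviation "gi \<equiv> inv_into X g"

lemma gX: "g ` X = Y" using bij by (simp add: bij_betw_def)
lemma injg: "inj_on g X" using bij by (simp add: bij_betw_def)
lemma finY: "finite Y" using gX finX by blast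

sublocale C: bcx R X idx GG GGm
  by (rule pb_bcx) (use finX injX gX in auto)

sublocale Yc: bcx R Y idx' H Hm
  by (rule ysh_bcx) (use finY injY in auto)

lemma gi_sub: "U \<subseteq> Y \<Longrightarrow> gi ` U \<subseteq> X"
proof
  fix x assume U: "U \<subseteq> Y" and "x \<in> gi ` U"
  then obtain u where u: "u \<in> U" "x = gi u" by blast
  then have "u \<in> g ` X" using U gX by blast
  then show "x \<in> X" using u inv_into_into by metis
qed

lemma g_gi: "U \<subseteq> Y \<Longrightarrow> g ` (gi ` U) = U"
  using gX by (simp add: image_inv_into_cancel)

lemma gi_g: "S \<subseteq> X \<Longrightarrow> gi ` (g ` S) = S"
  using injg by simp

lemma card_gi: "U \<subseteq> Y \<Longrightarrow> card (gi ` U) = card U"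
  by (rule card_image, rule inj_on_inv_into) (use gX in simp)

lemma card_g: "S \<subseteq> X \<Longrightarrow> card (g ` S) = card S"
  by (rule card_image, rule inj_on_subset[OF injg])

lemma g_diff: "S \<subseteq> X \<Longrightarrow> g ` (X - S) = Y - g ` S"
proof -
  assume S: "S \<subseteq> X"
  have "g ` (X - S) = g ` X - g ` S" by (rule inj_on_image_set_diff[OF injg]) (use S in auto)
  then show ?thesis using gX by simp
qed

definition eps2 :: "'b set \<Rightarrow> nat" where "eps2 S = invc idx (idx' \<circ> g) S"

definition phi :: "nat \<Rightarrow> ('b set \<Rightarrow> 'm) \<Rightarrow> 'c set \<Rightarrow> 'm" where
  "phi k c = (\<lambda>U. if U \<subseteq> Y \<and> card U = k then sg (H U) (eps2 (gi ` U)) (c (gi ` U)) else undefined)"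

definition psi :: "nat \<Rightarrow> ('c set \<Rightarrow> 'm) \<Rightarrow> 'b set \<Rightarrow> 'm" where
  "psi k c = (\<lambda>S. if S \<subseteq> X \<and> card S = k then sg (GG S) (eps2 S) (c (g ` S)) else undefined)"

lemma phi_closed: "c \<in> bchains X GG k \<Longrightarrow> phi k c \<in> bchains Y H k"
proof (rule Yc.chainsI)
  fix U assume c: "c \<in> bchains X GG k" and U: "U \<subseteq> Y" "card U = k"
  have "c (gi ` U) \<in> carrier (GG (gi ` U))"
    by (rule C.chainsD[OF c]) (use U gi_sub card_gi in auto)
  then have "c (gi ` U) \<in> carrier (H U)" using g_gi[OF U(1)] by simp
  then show "phi k c U \<in> carrier (H U)"
    using U abelian_group.sg_closed[OF Yc.agG[OF U(1)]] by (simp add: phi_def)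
qed (auto simp: phi_def)

lemma psi_closed: "c \<in> bchains Y H k \<Longrightarrow> psi k c \<in> bchains X GG k"
proof (rule C.chainsI)
  fix S assume c: "c \<in> bchains Y H k" and S: "S \<subseteq> X" "card S = k"
  have "c (g ` S) \<in> carrier (GG S)"
    by (rule Yc.chainsD[OF c]) (use S gX card_g in auto)
  then show "psi k c S \<in> carrier (GG S)"
    using S abelian_group.sg_closed[OF C.agG[OF S(1)]] by (simp add: psi_def)
qed (auto simp: psi_def)

lemma phi_psi: "c \<in> bchains Y H k \<Longrightarrow> phi k (psi k c) = c"
proof (rule Yc.chains_eqI)
  assume c: "c \<in> bchains Y H k"
  show "phi k (psi k c) \<in> bchains Y H k" using phi_closed psi_closed c by blast
  show "c \<in> bchains Y H k" by fact
  fix U assume U: "U \<subseteq> Y" "card U = k"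
  interpret M: abelian_group "H U" using Yc.agG U(1) by blast
  have "gi ` U \<subseteq> X" "card (gi ` U) = k" "g ` gi ` U = U" using U gi_sub card_gi g_gi by auto
  then show "phi k (psi k c) U = c U" using U Yc.chainsD[OF c U]
    by (simp add: phi_def psi_def M.sg_sg sg_def)
qed

lemma psi_phi: "c \<in> bchains X GG k \<Longrightarrow> psi k (phi k c) = c"
proof (rule C.chains_eqI)
  assume c: "c \<in> bchains X GG k"
  show "psi k (phi k c) \<in> bchains X GG k" using phi_closed psi_closed c by blast
  show "c \<in> bchains X GG k" by fact
  fix S assume S: "S \<subseteq> X" "card S = k"
  interpret M: abelian_group "GG S" using C.agG S(1) by blast
  have "g ` S \<subseteq> Y" "card (g ` S) = k" "gi ` g ` S = S" using S gX card_g gi_g by auto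
  then show "psi k (phi k c) S = c S" using S C.chainsD[OF c S]
    by (simp add: phi_def psi_def M.sg_sg sg_def)
qed

lemma phi_add: "c \<in> bchains X GG k \<Longrightarrow> c' \<in> bchains X GG k \<Longrightarrow>
   phi k (badd X GG k c c') = badd Y H k (phi k c) (phi k c')"
proof (rule ext)
  fix U assume c: "c \<in> bchains X GG k" and c': "c' \<in> bchains X GG k"
  show "phi k (badd X GG k c c') U = badd Y H k (phi k c) (phi k c') U"
  proof (cases "U \<subseteq> Y \<and> card U = k")
    case True
    then have U: "U \<subseteq> Y" "card U = k" by auto
    interpret M: abelian_group "H U" using Yc.agG U(1) by blast
    have i: "gi ` U \<subseteq> X" "card (gi ` U) = k" "g ` gi ` U = U" using U gi_sub card_gi g_gi by auto
    have "c (gi ` U) \<in> carrier (GG (gi ` U))" "c' (gi ` U) \<in> carrier (GG (gi ` U))"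
      using C.chainsD[OF c i(1,2)] C.chainsD[OF c' i(1,2)] by auto
    then show ?thesis using i U by (simp add: phi_def badd_def M.sg_add)
  qed (auto simp: phi_def badd_def)
qed

lemma phi_smult: "r \<in> carrier R \<Longrightarrow> c \<in> bchains X GG k \<Longrightarrow>
   phi k (bsmult X GG k r c) = bsmult Y H k r (phi k c)"
proof (rule ext)
  fix U assume r: "r \<in> carrier R" and c: "c \<in> bchains X GG k"
  show "phi k (bsmult X GG k r c) U = bsmult Y H k r (phi k c) U"
  proof (cases "U \<subseteq> Y \<and> card U = k")
    case True
    then have U: "U \<subseteq> Y" "card U = k" by auto
    interpret M: module R "H U" using Yc.modG U(1) by blast
    have i: "gi ` U \<subseteq> X" "card (gi ` U) = k" "g ` gi ` U = U" using U gi_sub card_gi g_gi by auto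
    have "c (gi ` U) \<in> carrier (GG (gi ` U))"
      using C.chainsD[OF c i(1,2)] by auto
    then show ?thesis using i U r by (simp add: phi_def bsmult_def M.sg_smult)
  qed (auto simp: phi_def bsmult_def)
qed

lemma psi_zero: "psi k (bzero Y H k) = bzero X GG k"
proof (rule ext)
  fix S show "psi k (bzero Y H k) S = bzero X GG k S"
  proof (cases "S \<subseteq> X \<and> card S = k")
    case True
    then have "g ` S \<subseteq> Y" "card (g ` S) = k" using gX card_g by auto
    then show ?thesis using True abelian_group.sg_zero[OF C.agG] by (simp add: psi_def bzero_def)
  qed (auto simp: psi_def bzero_def)
qed

lemma phi_zero: "phi k (bzero X GG k) = bzero Y H k"
proof -
  have "addmap (C.CG k) (Yc.CG k) (phi k)"
    unfolding addmap_def using phi_closed phi_add by simp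
  from addmap_zero[OF C.CG_ag Yc.CG_ag this] show ?thesis by simp
qed

lemma card_gimg: "S \<subseteq> X \<Longrightarrow> card {z \<in> g ` S. idx' z < idx' (g x)} = card {z \<in> S. (idx' \<circ> g) z < (idx' \<circ> g) x}"
proof -
  assume S: "S \<subseteq> X"
  have "{z \<in> g ` S. idx' z < idx' (g x)} = g ` {z \<in> S. (idx' \<circ> g) z < (idx' \<circ> g) x}" by auto
  moreover have "inj_on g {z \<in> S. (idx' \<circ> g) z < (idx' \<circ> g) x}"
    by (rule inj_on_subset[OF injg]) (use S in auto)
  ultimately show ?thesis by (simp add: card_image)
qed

lemma phi_chain: "c \<in> bchains X GG (Suc k) \<Longrightarrow>
   phi k (C.D (Suc k) c) = Yc.D (Suc k) (phi (Suc k) c)"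
proof (rule ext)
  fix U assume c: "c \<in> bchains X GG (Suc k)"
  have pc: "phi (Suc k) c \<in> bchains Y H (Suc k)" using phi_closed c by blast
  show "phi k (C.D (Suc k) c) U = Yc.D (Suc k) (phi (Suc k) c) U"
  proof (cases "U \<subseteq> Y \<and> card U = k")
    case False then show ?thesis by (auto simp: phi_def Yc.D_undef)
  next
    case True
    then have U: "U \<subseteq> Y" "card U = k" by auto
    define S where "S = gi ` U"
    have S: "S \<subseteq> X" "card S = k" "g ` S = U" using U gi_sub card_gi g_gi unfolding S_def by auto
    interpret M: abelian_group "H U" using Yc.agG U(1) by blast
    have fin: "finite (X - S)" using finX by auto
    have dP: "C.dterm c S \<in> X - S \<rightarrow> carrier (H U)" using C.dterm_Pi[OF c S(1,2)] S(3) by simp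
    have dPY: "Yc.dterm (phi (Suc k) c) U \<in> Y - U \<rightarrow> carrier (H U)" using Yc.dterm_Pi[OF pc U] .
    have ig: "inj_on g (X - S)" by (rule inj_on_subset[OF injg]) auto
    have trm: "Yc.dterm (phi (Suc k) c) U (g x) = sg (H U) (eps2 S) (C.dterm c S x)" if x: "x \<in> X - S" for x
    proof -
      define A where "A = insert x S"
      have A: "A \<subseteq> X" "card A = Suc k" using C.ins_ix[OF S(1,2) x] unfolding A_def by auto
      have gA: "g ` A = insert (g x) U" using S(3) unfolding A_def by (simp add: image_insert)
      have gAY: "g ` A \<subseteq> Y" "card (g ` A) = Suc k" using A gX card_g by auto
      have AS: "S \<subseteq> A" unfolding A_def by blast
      have v: "c A \<in> carrier (GG A)" using C.chainsD[OF c A] .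
      have "phi (Suc k) c (g ` A) = sg (GG A) (eps2 A) (c A)"
        using gAY gi_g[OF A(1)] by (simp add: phi_def)
      then have "Yc.dterm (phi (Suc k) c) U (g x) =
          sg (H U) (card {z \<in> U. idx' z < idx' (g x)} + eps2 A) (GGm A S (c A))"
        unfolding Yc.dterm_def
        using hm_sg[OF image_mono[OF AS] gAY(1) v] hm_closed[OF image_mono[OF AS] gAY(1) v] S(3)
        by (simp add: M.sg_sg gA[symmetric])
      also have "\<dots> = sg (H U) (eps2 S + card {z \<in> S. idx z < idx x}) (GGm A S (c A))"
      proof (rule M.sg_par)
        have xS: "x \<notin> S" "x \<in> X" using x by auto
        have "even (card {z \<in> S. (idx' \<circ> g) z < (idx' \<circ> g) x} + invc idx (idx' \<circ> g) (insert x S))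
            = even (invc idx (idx' \<circ> g) S + card {z \<in> S. idx z < idx x})"
        proof (rule par4)
          show "finite S" using S finX finite_subset by blast
          show "x \<notin> S" by fact
          fix z assume z: "z \<in> S"
          then have zX: "z \<in> X" "z \<noteq> x" using S xS by auto
          show "idx z \<noteq> idx x" using injX zX xS by (meson inj_on_def)
          have "g z \<noteq> g x" using injg zX xS by (meson inj_on_def)
          moreover have "g z \<in> Y" "g x \<in> Y" using gX zX xS by auto
          ultimately show "(idx' \<circ> g) z \<noteq> (idx' \<circ> g) x" using injY by (simp add: inj_on_def) blast
        qed
        then show "even (card {z \<in> U. idx' z < idx' (g x)} + eps2 A) = even (eps2 S + card {z \<in> S. idx z < idx x})"
          using card_gimg[OF S(1), of x] S(3) unfolding eps2_def A_def by simp
      qed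
      also have "\<dots> = sg (H U) (eps2 S) (C.dterm c S x)"
        unfolding C.dterm_def A_def[symmetric] using S(3) hm_closed[OF image_mono[OF AS] gAY(1) v]
        by (simp add: M.sg_sg)
      finally show ?thesis .
    qed
    have "Yc.D (Suc k) (phi (Suc k) c) U = finsum (H U) (Yc.dterm (phi (Suc k) c) U) (g ` (X - S))"
      using Yc.D_val[OF U] g_diff[OF S(1)] S(3) by simp
    also have "\<dots> = finsum (H U) (\<lambda>x. Yc.dterm (phi (Suc k) c) U (g x)) (X - S)"
      by (rule M.finsum_reindex) (use dPY g_diff[OF S(1)] S(3) ig in auto)
    also have "\<dots> = finsum (H U) (\<lambda>x. sg (H U) (eps2 S) (C.dterm c S x)) (X - S)"
      by (rule M.finsum_cong') (use trm dP in \<open>auto intro!: M.sg_closed\<close>)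
    also have "\<dots> = sg (H U) (eps2 S) (finsum (H U) (C.dterm c S) (X - S))"
      by (rule M.sg_finsum[symmetric]) (use dP fin in auto)
    also have "\<dots> = phi k (C.D (Suc k) c) U"
      using U S C.D_val[OF S(1,2)] unfolding S_def by (simp add: phi_def)
    finally show ?thesis by simp
  qed
qed

lemma rel_iso: "mod_isomorphic R (HC X idx GG GGm k) (HC Y idx' H Hm k)"
proof (rule hc_iso[OF C.bcx_axioms Yc.bcx_axioms, where f = "phi k"])
  show "\<And>c. c \<in> bchains X GG k \<Longrightarrow> phi k c \<in> bchains Y H k" by (rule phi_closed)
  show "\<And>c c'. c \<in> bchains X GG k \<Longrightarrow> c' \<in> bchains X GG k \<Longrightarrow>
      phi k (badd X GG k c c') = badd Y H k (phi k c) (phi k c')" by (rule phi_add)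
  show "\<And>r c. r \<in> carrier R \<Longrightarrow> c \<in> bchains X GG k \<Longrightarrow>
      phi k (bsmult X GG k r c) = bsmult Y H k r (phi k c)" by (rule phi_smult)
next
  fix c assume "c \<in> bbounds X idx GG GGm k"
  then obtain y where y: "y \<in> bchains X GG (Suc k)" "c = C.D (Suc k) y" by (auto simp: bbounds_def)
  then have "phi k c = Yc.D (Suc k) (phi (Suc k) y)" using phi_chain by simp
  then show "phi k c \<in> bbounds Y idx' H Hm k" using phi_closed[OF y(1)] by (auto simp: bbounds_def)
next
  fix c assume cz: "c \<in> bcycles X idx GG GGm k"
  have c: "c \<in> bchains X GG k" using cz C.Z_sub by blast
  show "phi k c \<in> bcycles Y idx' H Hm k"
  proof (cases k)
    case 0 then show ?thesis using phi_closed[OF c] by (simp add: bcycles_def)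
  next
    case (Suc k0)
    have "C.D (Suc k0) c = bzero X GG k0" using cz Suc by (simp add: bcycles_def)
    then have "Yc.D (Suc k0) (phi (Suc k0) c) = bzero Y H k0"
      using phi_chain[of c k0] c Suc phi_zero by simp
    then show ?thesis using phi_closed[OF c] Suc by (simp add: bcycles_def)
  qed
next
  fix c assume cz: "c \<in> bcycles X idx GG GGm k" and pb: "phi k c \<in> bbounds Y idx' H Hm k"
  have c: "c \<in> bchains X GG k" using cz C.Z_sub by blast
  obtain y' where y': "y' \<in> bchains Y H (Suc k)" "phi k c = Yc.D (Suc k) y'" using pb by (auto simp: bbounds_def)
  define y where "y = psi (Suc k) y'"
  have y: "y \<in> bchains X GG (Suc k)" "phi (Suc k) y = y'" using psi_closed phi_psi y' unfolding y_def by auto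
  have "phi k (C.D (Suc k) y) = phi k c" using phi_chain[OF y(1)] y y' by simp
  then have "psi k (phi k (C.D (Suc k) y)) = psi k (phi k c)" by simp
  then have "C.D (Suc k) y = c" using psi_phi c C.D_closed[OF y(1)] by simp
  then show "c \<in> bbounds X idx GG GGm k" using y(1) unfolding bbounds_def by blast
next
  fix c' assume cz: "c' \<in> bcycles Y idx' H Hm k"
  have c': "c' \<in> bchains Y H k" using cz Yc.Z_sub by blast
  define c where "c = psi k c'"
  have c: "c \<in> bchains X GG k" "phi k c = c'" using psi_closed phi_psi c' unfolding c_def by auto
  have "c \<in> bcycles X idx GG GGm k"
  proof (cases k)
    case 0 then show ?thesis using c by (simp add: bcycles_def)
  next
    case (Suc k0)
    have cc: "c \<in> bchains X GG (Suc k0)" using c Suc by simp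
    have "Yc.D (Suc k0) c' = bzero Y H k0" using cz Suc by (simp add: bcycles_def)
    then have "phi k0 (C.D (Suc k0) c) = bzero Y H k0" using phi_chain[OF cc] c Suc by simp
    then have "psi k0 (phi k0 (C.D (Suc k0) c)) = bzero X GG k0" using psi_zero by simp
    then have "C.D (Suc k0) c = bzero X GG k0" using psi_phi C.D_closed[OF cc] by simp
    then show ?thesis using c Suc by (simp add: bcycles_def)
  qed
  then show "\<exists>c\<in>bcycles X idx GG GGm k. bcoset Y idx' H Hm k c' = bcoset Y idx' H Hm k (phi k c)"
    using c by metis
qed

end

lemma (in ysh) pb_iso:
  fixes X :: "'b set" and idx :: "'b \<Rightarrow> nat" and g :: "'b \<Rightarrow> 'c" and idx' :: "'c \<Rightarrow> nat"
  assumes "finite X" "inj_on idx X" "g ` X = Y" "inj_on idx' Y"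
  shows "mod_isomorphic R (HC X idx (\<lambda>S. H (g ` S)) (\<lambda>T S. Hm (g ` T) (g ` S)) k) (HC Y idx' H Hm k)"
  using assms
proof (induction "card X" arbitrary: X rule: less_induct)
  case less
  show ?case
  proof (cases "inj_on g X")
    case True
    interpret rl: rlb R Y H Hm X idx g idx'
      by (rule rlb.intro, rule ysh_axioms, rule rlb_axioms.intro) (use less.prems True in \<open>auto simp: bij_betw_def\<close>)
    show ?thesis by (rule rl.rel_iso)
  next
    case False
    then obtain b b' where bb: "b \<in> X" "b' \<in> X" "b \<noteq> b'" "g b = g b'" unfolding inj_on_def by blast
    interpret st: stp R Y H Hm X idx g b b'
      by (rule stp.intro, rule ysh_axioms, rule stp_axioms.intro) (use less.prems bb in auto)
    have s1: "mod_isomorphic R (HC X idx (\<lambda>S. H (g ` S)) (\<lambda>T S. Hm (g ` T) (g ` S)) k)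
        (HC (X - {b'}) idx (\<lambda>S. H (g ` S)) (\<lambda>T S. Hm (g ` T) (g ` S)) k)"
      by (rule st.step_iso)
    have c: "card (X - {b'}) < card X" using card_Diff1_less[OF less.prems(1) bb(2)] .
    have gX': "g ` (X - {b'}) = Y"
    proof -
      have "g ` (X - {b'}) \<subseteq> Y" using less.prems(3) by auto
      moreover have "Y \<subseteq> g ` (X - {b'})"
      proof
        fix y assume "y \<in> Y"
        then obtain x where x: "x \<in> X" "y = g x" using less.prems(3) by auto
        show "y \<in> g ` (X - {b'})"
        proof (cases "x = b'")
          case True then show ?thesis using x bb by (metis DiffI image_eqI singletonD)
        next
          case False then show ?thesis using x by auto
        qed
      qed
      ultimately show ?thesis by blast
    qed
    have s2: "mod_isomorphic R (HC (X - {b'}) idx (\<lambda>S. H (g ` S)) (\<lambda>T S. Hm (g ` T) (g ` S)) k) (HC Y idx' H Hm k)"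
    proof (rule less.hyps[OF c])
      show "finite (X - {b'})" using less.prems by auto
      show "inj_on idx (X - {b'})" using less.prems(2) by (rule inj_on_subset) auto
    qed (use less.prems gX' in auto)
    show ?thesis by (rule mod_iso_trans[OF s1 s2])
  qed
qed

lemma rk_strict:
  fixes rk :: "'a::{finite,complete_lattice} \<Rightarrow> nat"
  assumes cov: "\<And>x y. lcovers x y \<Longrightarrow> rk y = rk x + 1"
  shows "x < y \<Longrightarrow> rk x < rk y"
proof (induction "card {z. x < z \<and> z \<le> y}" arbitrary: x rule: less_induct)
  case less
  let ?M = "{z. x < z \<and> z \<le> y}"
  have yM: "y \<in> ?M" using less.prems by simp
  have fM: "finite ?M" by (rule finite_subset[OF subset_UNIV]) simp
  obtain z where z: "z \<in> ?M" "\<forall>w\<in>?M. w \<le> z \<longrightarrow> z = w"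
    using finite_has_minimal[OF fM] yM by blast
  have xz: "x < z" and zy: "z \<le> y" using z(1) by simp_all
  have lc: "lcovers x z" unfolding lcovers_def
  proof (intro conjI notI)
    show "x < z" by (rule xz)
  next
    assume "\<exists>w. x < w \<and> w < z"
    then obtain w where w: "x < w" "w < z" by blast
    have "w \<le> y" using w(2) zy by (rule less_le_trans[THEN less_imp_le])
    then have "w \<in> ?M" using w(1) by simp
    then have "z = w" using z(2) w(2) by (simp add: less_imp_le)
    then show False using w(2) by simp
  qed
  then have rz: "rk z = rk x + 1" using cov by blast
  show ?case
  proof (cases "z = y")
    case True then show ?thesis using rz by simp
  next
    case False
    then have zy': "z < y" using zy by (simp add: order.strict_iff_order)
    have sub: "{w. z < w \<and> w \<le> y} \<subseteq> ?M"
    proof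
      fix w assume "w \<in> {w. z < w \<and> w \<le> y}"
      then have "z < w" "w \<le> y" by simp_all
      then show "w \<in> ?M" using xz by (simp add: less_trans[of x z w])
    qed
    have "z \<notin> {w. z < w \<and> w \<le> y}" by simp
    then have "{w. z < w \<and> w \<le> y} \<subset> ?M" using sub z(1) by blast
    then have "card {w. z < w \<and> w \<le> y} < card ?M" by (rule psubset_card_mono[OF fM])
    then have "rk z < rk y" using less.hyps zy' by blast
    then show ?thesis using rz by simp
  qed
qed

lemma atomD: "p \<in> latoms \<Longrightarrow> bot < p \<and> \<not> (\<exists>z. bot < z \<and> z < p)"
  by (simp add: latoms_def lcovers_def)

lemma atom_le: "p \<in> latoms \<Longrightarrow> q \<in> latoms \<Longrightarrow> p \<le> q \<Longrightarrow> p = q"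
proof (rule ccontr)
  assume p: "p \<in> latoms" and q: "q \<in> latoms" and le: "p \<le> q" and ne: "p \<noteq> q"
  have "bot < p" using atomD[OF p] by blast
  moreover have "p < q" using le ne by auto
  ultimately show False using atomD[OF q] by blast
qed

lemma atom_join_covers:
  fixes a b :: "'a::{finite,complete_lattice}"
  assumes geo: "geometric_lattice TYPE('a)" and a: "a \<in> latoms" and b: "b \<in> latoms" "b \<noteq> a"
  shows "lcovers a (sup a b)"
proof -
  obtain rk :: "'a \<Rightarrow> nat" where rk0: "rk bot = 0" and cov: "\<And>x y. lcovers x y \<Longrightarrow> rk y = rk x + 1"
    and sm: "\<And>x y. rk (sup x y) + rk (inf x y) \<le> rk x + rk y"
    using geo unfolding geometric_lattice_def by blast
  have ra: "rk a = 1" using cov[of bot a] a rk0 by (simp add: latoms_def)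
  have rb: "rk b = 1" using cov[of bot b] b rk0 by (simp add: latoms_def)
  have nab: "\<not> a \<le> b" using atom_le[OF a b(1)] b(2) by auto
  have nba: "\<not> b \<le> a" using atom_le[OF b(1) a] b(2) by auto
  have iab: "inf a b = bot"
  proof (rule ccontr)
    assume "inf a b \<noteq> bot"
    then have "bot < inf a b" by (simp add: bot_less)
    moreover have "inf a b \<noteq> a" using nab by (simp add: le_iff_inf)
    then have "inf a b < a" using inf_le1[of a b] by (simp add: order.strict_iff_order)
    ultimately show False using atomD[OF a] by blast
  qed
  have r2: "rk (sup a b) \<le> 2" using sm[of a b] iab rk0 ra rb by simp
  have "sup a b \<noteq> a" using nba by (simp add: le_iff_sup sup_commute)
  then have lt: "a < sup a b" using sup_ge1[of a b] by (simp add: order.strict_iff_order)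
  show ?thesis unfolding lcovers_def
  proof (intro conjI notI)
    show "a < sup a b" by (rule lt)
  next
    assume "\<exists>z. a < z \<and> z < sup a b"
    then obtain z where z: "a < z" "z < sup a b" by blast
    have "rk a < rk z" "rk z < rk (sup a b)"
      using rk_strict[where rk = rk, OF cov z(1)] rk_strict[where rk = rk, OF cov z(2)] by simp_all
    then show False using ra r2 by simp
  qed
qed

lemma cover_is_join:
  fixes a c :: "'a::{finite,complete_lattice}"
  assumes geo: "geometric_lattice TYPE('a)" and c: "lcovers a c"
  shows "\<exists>b \<in> latoms - {a}. sup a b = c"
proof -
  have at: "c = Sup {p \<in> latoms. p \<le> c}" using geo unfolding geometric_lattice_def by blast
  have ac: "a < c" using c by (simp add: lcovers_def)
  obtain p where p: "p \<in> latoms" "p \<le> c" "\<not> p \<le> a"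
  proof (rule ccontr)
    assume "\<not> thesis"
    then have "\<forall>p. p \<in> latoms \<and> p \<le> c \<longrightarrow> p \<le> a" using that by blast
    then have "Sup {p \<in> latoms. p \<le> c} \<le> a" by (intro Sup_least) auto
    then show False using at ac by simp
  qed
  have pa: "p \<noteq> a" using p by auto
  have le: "sup a p \<le> c" using p ac by simp
  have "sup a p \<noteq> a" using p(3) by (simp add: le_iff_sup sup_commute)
  then have lt: "a < sup a p" using sup_ge1[of a p] by (simp add: order.strict_iff_order)
  have "sup a p = c"
  proof (rule ccontr)
    assume "sup a p \<noteq> c"
    then have "sup a p < c" using le by (simp add: order.strict_iff_order)
    then show False using lt c by (auto simp: lcovers_def)
  qed
  then show ?thesis using p pa by blast
qed

lemma lub_eq: "lub_in {x. (a::'a::complete_lattice) \<le> x} U = sup a (Sup U)"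
  unfolding lub_in_def
proof (rule the_equality)
  show "sup a (Sup U) \<in> {x. a \<le> x} \<and> (\<forall>s\<in>U. s \<le> sup a (Sup U)) \<and>
      (\<forall>v\<in>{x. a \<le> x}. (\<forall>s\<in>U. s \<le> v) \<longrightarrow> sup a (Sup U) \<le> v)"
    by (auto intro: le_supI2 Sup_upper Sup_least)
next
  fix u assume u: "u \<in> {x. a \<le> x} \<and> (\<forall>s\<in>U. s \<le> u) \<and> (\<forall>v\<in>{x. a \<le> x}. (\<forall>s\<in>U. s \<le> v) \<longrightarrow> u \<le> v)"
  have "\<forall>s\<in>U. s \<le> sup a (Sup U)" by (simp add: Sup_upper le_supI2)
  then have "u \<le> sup a (Sup U)" using u by simp
  moreover have "sup a (Sup U) \<le> u" using u by (auto intro: Sup_least)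
  ultimately show "u = sup a (Sup U)" by simp
qed

lemma sup_img: "sup a (Sup (sup a ` S)) = Sup (insert (a::'a::complete_lattice) S)"
proof (rule antisym)
  have a1: "a \<le> Sup (insert a S)" by (rule Sup_upper) simp
  have "\<forall>s\<in>S. sup a s \<le> Sup (insert a S)"
  proof
    fix s assume "s \<in> S"
    then have "s \<le> Sup (insert a S)" by (intro Sup_upper) simp
    then show "sup a s \<le> Sup (insert a S)" using a1 by simp
  qed
  then have "Sup (sup a ` S) \<le> Sup (insert a S)" by (simp add: Sup_le_iff)
  then show "sup a (Sup (sup a ` S)) \<le> Sup (insert a S)" using a1 by simp
next
  have "\<forall>s\<in>S. s \<le> Sup (sup a ` S)"
  proof
    fix s assume s: "s \<in> S"
    have "s \<le> sup a s" by simp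
    also have "\<dots> \<le> Sup (sup a ` S)" using s by (intro Sup_upper) simp
    finally show "s \<le> Sup (sup a ` S)" .
  qed
  then have "Sup S \<le> Sup (sup a ` S)" by (simp add: Sup_le_iff)
  then show "Sup (insert a S) \<le> sup a (Sup (sup a ` S))" by (simp add: Sup_insert le_supI2)
qed

lemma sheaf_parts:
  assumes s: "is_sheaf R F res"
  shows sheaf_mod: "module R (F x)"
    and sheaf_closed: "x \<le> y \<Longrightarrow> u \<in> carrier (F y) \<Longrightarrow> res y x u \<in> carrier (F x)"
    and sheaf_add: "x \<le> y \<Longrightarrow> u \<in> carrier (F y) \<Longrightarrow> v \<in> carrier (F y) \<Longrightarrow>
       res y x (u \<oplus>\<^bsub>F y\<^esub> v) = res y x u \<oplus>\<^bsub>F x\<^esub> res y x v"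
    and sheaf_smult: "x \<le> y \<Longrightarrow> r \<in> carrier R \<Longrightarrow> u \<in> carrier (F y) \<Longrightarrow>
       res y x (r \<odot>\<^bsub>F y\<^esub> u) = r \<odot>\<^bsub>F x\<^esub> res y x u"
    and sheaf_id: "w \<in> carrier (F z) \<Longrightarrow> res z z w = w"
proof -
  note h = s[unfolded is_sheaf_def]
  note h1 = conjunct1[OF h]
  note h2 = conjunct1[OF conjunct2[OF h], rule_format]
  note h3 = conjunct1[OF conjunct2[OF conjunct2[OF h]], rule_format]
  show "module R (F x)" using h1 by (rule spec)
  show "x \<le> y \<Longrightarrow> u \<in> carrier (F y) \<Longrightarrow> res y x u \<in> carrier (F x)"
    using h2 by blast
  show "x \<le> y \<Longrightarrow> u \<in> carrier (F y) \<Longrightarrow> v \<in> carrier (F y) \<Longrightarrow>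
       res y x (u \<oplus>\<^bsub>F y\<^esub> v) = res y x u \<oplus>\<^bsub>F x\<^esub> res y x v"
    using h2 by blast
  show "x \<le> y \<Longrightarrow> r \<in> carrier R \<Longrightarrow> u \<in> carrier (F y) \<Longrightarrow>
       res y x (r \<odot>\<^bsub>F y\<^esub> u) = r \<odot>\<^bsub>F x\<^esub> res y x u"
    using h2 by blast
  show "w \<in> carrier (F z) \<Longrightarrow> res z z w = w" using h3 by blast
qed

theorem theorem6:
  fixes R :: "'r ring"
    and F :: "'a::{finite,complete_lattice} \<Rightarrow> ('r,'m) module"
    and res :: "'a \<Rightarrow> 'a \<Rightarrow> 'm \<Rightarrow> 'm"
    and a :: 'a
    and idx1 idx2 :: "'a \<Rightarrow> nat"
    and i :: nat
  assumes "geometric_lattice TYPE('a)"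
    and "is_sheaf R F res"
    and "a \<in> latoms"
    and "inj_on idx1 (latoms - {a})"
    and "inj_on idx2 {x. lcovers a x}"
  shows "mod_isomorphic R
     (HC (latoms - {a}) idx1 (\<lambda>S. F (Sup (insert a S)))
         (\<lambda>T S. res (Sup (insert a T)) (Sup (insert a S))) i)
     (HC {x. lcovers a x} idx2 (\<lambda>S. F (lub_in {x. a \<le> x} S))
         (\<lambda>T S. res (lub_in {x. a \<le> x} T) (lub_in {x. a \<le> x} S)) i)"
proof -
  note geo = assms(1) and sh = assms(2) and aat = assms(3)
  define Y where "Y = {x. lcovers a x}"
  define H where "H = (\<lambda>U. F (lub_in {x. a \<le> x} U))"
  define Hm where "Hm = (\<lambda>U V. res (lub_in {x. a \<le> x} U) (lub_in {x. a \<le> x} V))"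
  define g where "g = sup a"
  have lmono: "V \<subseteq> U \<Longrightarrow> lub_in {x. a \<le> x} V \<le> lub_in {x. a \<le> x} U" for U V
    unfolding lub_eq by (intro sup_mono order_refl Sup_subset_mono)
  have ys: "ysh R Y H Hm"
  proof (rule ysh.intro)
    fix U show "module R (H U)" unfolding H_def by (rule sheaf_mod[OF sh])
  next
    fix U V u assume "V \<subseteq> U" "u \<in> carrier (H U)"
    then show "Hm U V u \<in> carrier (H V)" unfolding H_def Hm_def by (intro sheaf_closed[OF sh] lmono)
  next
    fix U V u v assume "V \<subseteq> U" "u \<in> carrier (H U)" "v \<in> carrier (H U)"
    then show "Hm U V (u \<oplus>\<^bsub>H U\<^esub> v) = Hm U V u \<oplus>\<^bsub>H V\<^esub> Hm U V v"
      unfolding H_def Hm_def by (intro sheaf_add[OF sh] lmono)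
  next
    fix U V r u assume "V \<subseteq> U" "r \<in> carrier R" "u \<in> carrier (H U)"
    then show "Hm U V (r \<odot>\<^bsub>H U\<^esub> u) = r \<odot>\<^bsub>H V\<^esub> Hm U V u"
      unfolding H_def Hm_def by (intro sheaf_smult[OF sh] lmono)
  next
    fix U u assume "u \<in> carrier (H U)"
    then show "Hm U U u = u" unfolding H_def Hm_def by (rule sheaf_id[OF sh])
  qed
  have gX: "g ` (latoms - {a}) = Y"
  proof
    show "g ` (latoms - {a}) \<subseteq> Y"
      using atom_join_covers[OF geo aat] unfolding g_def Y_def by blast
    show "Y \<subseteq> g ` (latoms - {a})"
    proof
      fix c assume "c \<in> Y"
      then obtain b where "b \<in> latoms - {a}" "sup a b = c"
        using cover_is_join[OF geo] unfolding Y_def by blast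
      then show "c \<in> g ` (latoms - {a})" unfolding g_def by blast
    qed
  qed
  have fin: "finite (latoms - {(a::'a)})" by (rule finite_subset[OF subset_UNIV]) simp
  have eqF: "(\<lambda>S. F (Sup (insert a S))) = (\<lambda>S. H (g ` S))"
    by (rule ext) (simp add: H_def g_def lub_eq sup_img)
  have eqR: "(\<lambda>T S. res (Sup (insert a T)) (Sup (insert a S))) = (\<lambda>T S. Hm (g ` T) (g ` S))"
    by (intro ext) (simp add: Hm_def g_def lub_eq sup_img)
  have "mod_isomorphic R (HC (latoms - {a}) idx1 (\<lambda>S. H (g ` S)) (\<lambda>T S. Hm (g ` T) (g ` S)) i) (HC Y idx2 H Hm i)"
    by (rule ysh.pb_iso[OF ys fin assms(4) gX]) (use assms(5) in \<open>simp add: Y_def\<close>)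
  then show ?thesis unfolding eqF eqR by (simp add: Y_def H_def Hm_def)
qed

end
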